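(* Let $\boldsymbol{\alpha}=(\alpha_1,\dots,\alpha_d)\in\mathbb{R}^d$ be such that $1,\alpha_1,\ldots,\alpha_d$ form a $\mathbb{Q}$-basis for an algebraic number field $K\subseteq\mathbb{R}$, let $\Lambda=\mathbb{Z}+\alpha_1\mathbb{Z}+\cdots+\alpha_d\mathbb{Z}$, and let $s\in\Lambda^*$. For $u\in\mathcal{Z}_\Lambda^\times$ define $q_u=\mathrm{Tr}(su)\in\mathbb{Z}$ and $\boldsymbol{p}_u\in\mathbb{Z}^d$ by $p_{u,i}=\mathrm{Tr}(su\alpha_i)$ for $1\le i\le d$. Then there is an invertible real $d\times d$ matrix $M(\boldsymbol{\alpha})$, depending only on $\boldsymbol{\alpha}$, such that for each $u\in\mathcal{Z}_\Lambda^\times$ there exist $\gamma_u\in\mathbb{R}$ and $\boldsymbol{\beta}_u\in\mathbb{R}^d$ with \[|q_u|^{1/d}(q_u\boldsymbol{\alpha}-\boldsymbol{p}_u)=\gamma_u\boldsymbol{\beta}_uM(\boldsymbol{\alpha}),\] where $\boldsymbol{\beta}_u$ (a row vector) lies on the surface in $\mathbb{R}^d$ with equation \[|x_1\cdots x_r|\prod_{i=1}^m\left(x_{r+2i-1}^2+x_{r+2i}^2\right)=1,\] and where $\gamma_u\to|\mathrm{N}(s)|^{1/d}$ as $u$ tends to infinity along any sequence of dominant units.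
   Context: $[K:\mathbb{Q}]=d+1$; $K$ has $r+1$ real embeddings $\sigma_0=\mathrm{id},\sigma_1,\dots,\sigma_r$ and $2m$ non-real embeddings $\sigma_{r+1},\dots,\sigma_d$ with $\sigma_{r+i}=\overline{\sigma_{r+m+i}}$ ($1\le i\le m$), so $d=r+2m$. $\mathrm{N},\mathrm{Tr}$ are norm and trace $K\to\mathbb{Q}$. $\Lambda^*=\{x\in K:\mathrm{Tr}(xy)\in\mathbb{Z}\ \forall y\in\Lambda\}$ is the dual lattice with respect to the trace form. $\mathcal{O}_K$ is the ring of integers, $\mathcal{Z}_\Lambda=\{\gamma\in\mathcal{O}_K:\gamma\Lambda\subseteq\Lambda\}$ with unit group $\mathcal{Z}_\Lambda^\times$. The logarithmic embedding $\varphi(x)=(\log|\sigma_0(x)|,\dots,\log|\sigma_{r+m}(x)|)$ maps $\mathcal{Z}_\Lambda^\times$ onto a lattice in the hyperplane $x_0+\cdots+x_r+2x_{r+1}+\cdots+2x_{r+m}=0$ of $\mathbb{R}^{r+m+1}$; $\kappa_\Lambda>1$ is the infimum of all $\kappa>1$ such that every closed cube of side $\log\kappa$ centered on this hyperplane contains a point of $\varphi(\mathcal{Z}_\Lambda^\times)$. A dominant unit is $u\in\mathcal{Z}_\Lambda^\times$ such that for some $t>1$, $t\le|u|\le\kappa_\Lambda t$ and $t^{-1/d}\le|\sigma_i(u)|\le\kappa_\Lambda t^{-1/d}$ for $1\le i\le d$; "$u$ tends to infinity" means $|u|\to\infty$. *)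

theory Defs
  imports Complex_Main "HOL-Computational_Algebra.Polynomial" "Jordan_Normal_Form.Matrix"
begin

definition nf_K :: "nat \<Rightarrow> (nat \<Rightarrow> real) \<Rightarrow> real set" where
  "nf_K d \<alpha> = {x. \<exists>q :: nat \<Rightarrow> rat. x = of_rat (q 0) + (\<Sum>i=1..d. of_rat (q i) * \<alpha> i)}"

definition nf_basis :: "nat \<Rightarrow> (nat \<Rightarrow> real) \<Rightarrow> bool" where
  "nf_basis d \<alpha> \<longleftrightarrow>
     (\<forall>q :: nat \<Rightarrow> rat. of_rat (q 0) + (\<Sum>i=1..d. of_rat (q i) * \<alpha> i) = (0::real)
          \<longrightarrow> (\<forall>i\<le>d. q i = 0))
   \<and> (\<forall>x\<in>nf_K d \<alpha>. \<forall>y\<in>nf_K d \<alpha>. x * y \<in> nf_K d \<alpha>)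
   \<and> (\<forall>x\<in>nf_K d \<alpha>. inverse x \<in> nf_K d \<alpha>)"

text \<open>Field embeddings K -> C (extended by 0 outside K so that they form a finite set).\<close>

definition nf_embs :: "real set \<Rightarrow> (real \<Rightarrow> complex) set" where
  "nf_embs K = {\<sigma>. (\<forall>x\<in>K. \<forall>y\<in>K. \<sigma> (x + y) = \<sigma> x + \<sigma> y \<and> \<sigma> (x * y) = \<sigma> x * \<sigma> y)
                  \<and> \<sigma> 1 = 1 \<and> (\<forall>x. x \<notin> K \<longrightarrow> \<sigma> x = 0)}"

definition nf_real_embs :: "real set \<Rightarrow> (real \<Rightarrow> complex) set" where
  "nf_real_embs K = {\<sigma>\<in>nf_embs K. \<forall>x\<in>K. Im (\<sigma> x) = 0}"

definition nf_nonreal_embs :: "real set \<Rightarrow> (real \<Rightarrow> complex) set" where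
  "nf_nonreal_embs K = nf_embs K - nf_real_embs K"

definition nf_id_emb :: "real set \<Rightarrow> real \<Rightarrow> complex" where
  "nf_id_emb K = (\<lambda>x. if x \<in> K then complex_of_real x else 0)"

definition nf_trace :: "real set \<Rightarrow> real \<Rightarrow> real" where
  "nf_trace K x = Re (\<Sum>\<sigma>\<in>nf_embs K. \<sigma> x)"

definition nf_norm :: "real set \<Rightarrow> real \<Rightarrow> real" where
  "nf_norm K x = Re (\<Prod>\<sigma>\<in>nf_embs K. \<sigma> x)"

definition nf_lattice :: "nat \<Rightarrow> (nat \<Rightarrow> real) \<Rightarrow> real set" where
  "nf_lattice d \<alpha> = {x. \<exists>a :: nat \<Rightarrow> int. x = of_int (a 0) + (\<Sum>i=1..d. of_int (a i) * \<alpha> i)}"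

definition nf_dual :: "real set \<Rightarrow> real set \<Rightarrow> real set" where
  "nf_dual K \<Lambda> = {x\<in>K. \<forall>y\<in>\<Lambda>. nf_trace K (x * y) \<in> \<int>}"

definition coeff_ring :: "real set \<Rightarrow> real set \<Rightarrow> real set" where
  "coeff_ring K \<Lambda> = {g\<in>K. algebraic_int g \<and> (\<forall>l\<in>\<Lambda>. g * l \<in> \<Lambda>)}"

definition coeff_units :: "real set \<Rightarrow> real set \<Rightarrow> real set" where
  "coeff_units K \<Lambda> = {u\<in>coeff_ring K \<Lambda>. \<exists>v\<in>coeff_ring K \<Lambda>. u * v = 1}"

text \<open>Cube covering property of the logarithmic embedding.  A point of the hyperplane
  x_0+...+x_r+2x_{r+1}+...+2x_{r+m}=0 is encoded as a function c on all embeddings which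
  is constant on complex-conjugate pairs, with sum over all embeddings 0 (a pair contributes
  2 x_j).  Coordinates of phi(u) are log|sigma(u)|.\<close>
definition cube_cover :: "real set \<Rightarrow> real set \<Rightarrow> real \<Rightarrow> bool" where
  "cube_cover K \<Lambda> \<kappa> \<longleftrightarrow>
     (\<forall>c :: (real \<Rightarrow> complex) \<Rightarrow> real.
        (\<forall>\<sigma>\<in>nf_embs K. c (\<lambda>x. cnj (\<sigma> x)) = c \<sigma>) \<and> (\<Sum>\<sigma>\<in>nf_embs K. c \<sigma>) = 0 \<longrightarrow>
        (\<exists>u\<in>coeff_units K \<Lambda>. \<forall>\<sigma>\<in>nf_embs K. \<bar>ln (cmod (\<sigma> u)) - c \<sigma>\<bar> \<le> ln \<kappa> / 2))"

definition kappa :: "real set \<Rightarrow> real set \<Rightarrow> real" where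
  "kappa K \<Lambda> = Inf {\<kappa>. \<kappa> > 1 \<and> cube_cover K \<Lambda> \<kappa>}"

definition dominant_unit :: "nat \<Rightarrow> real set \<Rightarrow> real set \<Rightarrow> real \<Rightarrow> bool" where
  "dominant_unit d K \<Lambda> u \<longleftrightarrow> u \<in> coeff_units K \<Lambda> \<and>
     (\<exists>t>1. t \<le> \<bar>u\<bar> \<and> \<bar>u\<bar> \<le> kappa K \<Lambda> * t \<and>
        (\<forall>\<sigma>\<in>nf_embs K - {nf_id_emb K}.
           t powr (- 1 / real d) \<le> cmod (\<sigma> u) \<and> cmod (\<sigma> u) \<le> kappa K \<Lambda> * t powr (- 1 / real d)))"

text \<open>The surface |x_1...x_r| prod_{i=1}^m (x_{r+2i-1}^2 + x_{r+2i}^2) = 1 (0-based vector).\<close>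
definition on_surface :: "nat \<Rightarrow> nat \<Rightarrow> real vec \<Rightarrow> bool" where
  "on_surface r m x \<longleftrightarrow>
     \<bar>\<Prod>j<r. x $ j\<bar> * (\<Prod>i<m. (x $ (r + 2*i))\<^sup>2 + (x $ (r + 2*i + 1))\<^sup>2) = 1"

end

theory Submission
  imports Defs "Jordan_Normal_Form.Determinant" "Jordan_Normal_Form.Char_Poly"
begin


lemma sum_1d: "(\<Sum>i=1..d. f i) = (\<Sum>i<d. f (Suc i))"
  by (induction d) auto

locale nfb =
  fixes d :: nat and \<alpha> :: "nat \<Rightarrow> real"
  assumes basis: "nf_basis d \<alpha>"
begin

abbreviation "K \<equiv> nf_K d \<alpha>"
abbreviation "n \<equiv> Suc d"
definition al :: "nat \<Rightarrow> real" where "al i = (if i = 0 then 1 else \<alpha> i)"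

lemma rep_eq: "of_rat (q 0) + (\<Sum>i=1..d. of_rat (q i) * \<alpha> i) = (\<Sum>i<n. of_rat (q i) * al i)"
  unfolding sum.lessThan_Suc_shift sum_1d al_def by simp

lemma K_alt: "K = {x. \<exists>q. x = (\<Sum>i<n. of_rat (q i) * al i)}"
  unfolding nf_K_def rep_eq by simp

lemma indep: "(\<Sum>i<n. of_rat (q i) * al i) = (0::real) \<Longrightarrow> i < n \<Longrightarrow> q i = 0"
  using basis unfolding nf_basis_def rep_eq by auto

lemma K_mult: "x \<in> K \<Longrightarrow> y \<in> K \<Longrightarrow> x * y \<in> K"
  using basis unfolding nf_basis_def by auto
lemma K_inverse: "x \<in> K \<Longrightarrow> inverse x \<in> K"
  using basis unfolding nf_basis_def by auto

lemma K_I: "x = (\<Sum>i<n. of_rat (q i) * al i) \<Longrightarrow> x \<in> K"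
  unfolding K_alt by blast

lemma K_add: "x \<in> K \<Longrightarrow> y \<in> K \<Longrightarrow> x + y \<in> K"
proof -
  assume "x \<in> K" "y \<in> K"
  then obtain p q where "x = (\<Sum>i<n. of_rat (p i) * al i)" "y = (\<Sum>i<n. of_rat (q i) * al i)"
    unfolding K_alt by auto
  hence "x + y = (\<Sum>i<n. of_rat (p i + q i) * al i)"
    by (simp add: sum.distrib of_rat_add distrib_right del: sum.lessThan_Suc)
  thus ?thesis by (rule K_I)
qed

lemma K_smult: "x \<in> K \<Longrightarrow> of_rat c * x \<in> K"
proof -
  assume "x \<in> K"
  then obtain p where "x = (\<Sum>i<n. of_rat (p i) * al i)" unfolding K_alt by auto
  hence "of_rat c * x = (\<Sum>i<n. of_rat (c * p i) * al i)"
    by (simp add: sum_distrib_left of_rat_mult mult.assoc del: sum.lessThan_Suc)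
  thus ?thesis by (rule K_I)
qed

lemma K_al: "j < n \<Longrightarrow> al j \<in> K"
proof -
  assume j: "j < n"
  have "al j = (\<Sum>i<n. of_rat (if i = j then 1 else 0) * al i)"
  proof -
    have "(\<Sum>i<n. of_rat (if i = j then 1 else 0) * al i) = (\<Sum>i<n. if i = j then al i else 0)"
      by (rule sum.cong) auto
    thus ?thesis using j by (simp del: sum.lessThan_Suc)
  qed
  thus ?thesis by (rule K_I)
qed

lemma K_zero: "0 \<in> K"
  using K_smult[OF K_al[of 0], of 0] by simp
lemma K_one: "1 \<in> K"
  using K_al[of 0] by (simp add: al_def)
lemma K_rat: "of_rat c \<in> K"
  using K_smult[OF K_one, of c] by simp
lemma K_neg: "x \<in> K \<Longrightarrow> - x \<in> K"
  using K_smult[of x "-1"] by simp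
lemma K_diff: "x \<in> K \<Longrightarrow> y \<in> K \<Longrightarrow> x - y \<in> K"
  using K_add[OF _ K_neg] by simp
lemma K_alpha: "1 \<le> i \<Longrightarrow> i \<le> d \<Longrightarrow> \<alpha> i \<in> K"
  using K_al[of i] by (simp add: al_def)

lemma K_sum: "finite J \<Longrightarrow> (\<And>j. j \<in> J \<Longrightarrow> z j \<in> K) \<Longrightarrow> (\<Sum>j\<in>J. z j) \<in> K"
  by (induction J rule: finite_induct) (auto intro: K_add K_zero)

definition coord :: "real \<Rightarrow> nat \<Rightarrow> rat" where
  "coord x = (SOME q. x = (\<Sum>i<n. of_rat (q i) * al i))"

lemma coord: "x \<in> K \<Longrightarrow> x = (\<Sum>i<n. of_rat (coord x i) * al i)"
proof -
  assume "x \<in> K"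
  hence "\<exists>q. x = (\<Sum>i<n. of_rat (q i) * al i)" unfolding K_alt by blast
  thus ?thesis unfolding coord_def by (rule someI_ex)
qed

lemma coord_unique:
  assumes "x = (\<Sum>i<n. of_rat (q i) * al i)" "i < n"
  shows "coord x i = q i"
proof -
  have xK: "x \<in> K" using assms(1) by (rule K_I)
  have e: "(\<Sum>i<n. of_rat (coord x i) * al i) - (\<Sum>i<n. of_rat (q i) * al i) = 0"
    using coord[OF xK] assms(1) by simp
  have "(\<Sum>i<n. of_rat (coord x i - q i) * al i) = 0"
    unfolding e[symmetric]
    by (simp add: sum_subtractf of_rat_diff left_diff_distrib del: sum.lessThan_Suc)
  hence "coord x i - q i = 0" by (rule indep[of "\<lambda>i. coord x i - q i" i, OF _ assms(2)])
  thus ?thesis by simp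
qed

lemma coord_lin:
  assumes "finite J" "\<And>j. j \<in> J \<Longrightarrow> z j \<in> K" "i < n"
  shows "coord (\<Sum>j\<in>J. of_rat (a j) * z j) i = (\<Sum>j\<in>J. a j * coord (z j) i)"
proof -
  have "(\<Sum>j\<in>J. of_rat (a j) * z j) = (\<Sum>j\<in>J. of_rat (a j) * (\<Sum>k<n. of_rat (coord (z j) k) * al k))"
    by (rule sum.cong) (use coord assms(2) in auto)
  also have "\<dots> = (\<Sum>k<n. of_rat (\<Sum>j\<in>J. a j * coord (z j) k) * al k)"
    by (simp add: sum_distrib_left sum_distrib_right of_rat_sum of_rat_mult mult.assoc
        del: sum.lessThan_Suc) (rule sum.swap)
  finally show ?thesis using assms(3) by (rule coord_unique)
qed

lemma coord_al: "j < n \<Longrightarrow> i < n \<Longrightarrow> coord (al j) i = (if i = j then 1 else 0)"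
proof -
  assume j: "j < n" and i: "i < n"
  have "(\<Sum>i<n. of_rat (if i = j then 1 else 0) * al i) = (\<Sum>i<n. if i = j then al i else 0)"
    by (rule sum.cong) auto
  hence "al j = (\<Sum>i<n. of_rat (if i = j then 1 else 0) * al i)" using j by (simp del: sum.lessThan_Suc)
  from coord_unique[OF this i] show ?thesis .
qed

lemma coord_add: "x \<in> K \<Longrightarrow> y \<in> K \<Longrightarrow> i < n \<Longrightarrow> coord (x + y) i = coord x i + coord y i"
  using coord_lin[of "{0::nat,1}" "\<lambda>j. if j = 0 then x else y" i "\<lambda>_. 1"] by simp

lemma coord_smult: "x \<in> K \<Longrightarrow> i < n \<Longrightarrow> coord (of_rat c * x) i = c * coord x i"
  using coord_lin[of "{0::nat}" "\<lambda>j. x" i "\<lambda>_. c"] by simp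

abbreviation "E \<equiv> nf_embs K"

lemma emb_add: "\<sigma> \<in> E \<Longrightarrow> x \<in> K \<Longrightarrow> y \<in> K \<Longrightarrow> \<sigma> (x + y) = \<sigma> x + \<sigma> y"
  unfolding nf_embs_def by auto
lemma emb_mult: "\<sigma> \<in> E \<Longrightarrow> x \<in> K \<Longrightarrow> y \<in> K \<Longrightarrow> \<sigma> (x * y) = \<sigma> x * \<sigma> y"
  unfolding nf_embs_def by auto
lemma emb_one: "\<sigma> \<in> E \<Longrightarrow> \<sigma> 1 = 1"
  unfolding nf_embs_def by auto
lemma emb_out: "\<sigma> \<in> E \<Longrightarrow> x \<notin> K \<Longrightarrow> \<sigma> x = 0"
  unfolding nf_embs_def by auto

lemma emb_zero: "\<sigma> \<in> E \<Longrightarrow> \<sigma> 0 = 0"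
  using emb_add[of \<sigma> 0 0] K_zero by simp

lemma emb_neg: "\<sigma> \<in> E \<Longrightarrow> x \<in> K \<Longrightarrow> \<sigma> (- x) = - \<sigma> x"
  using emb_add[of \<sigma> x "-x"] K_neg emb_zero[of \<sigma>] by (simp add: eq_neg_iff_add_eq_0 add.commute)

lemma emb_nat: "\<sigma> \<in> E \<Longrightarrow> \<sigma> (of_nat k) = of_nat k"
proof (induction k)
  case 0 thus ?case using emb_zero by simp
next
  case (Suc k)
  have "of_nat k \<in> K" using K_rat[of "of_nat k"] by simp
  hence "\<sigma> (1 + of_nat k) = \<sigma> 1 + \<sigma> (of_nat k)" using emb_add[OF Suc.prems K_one] by simp
  thus ?case using Suc emb_one by (simp add: add.commute)
qed

lemma emb_int: "\<sigma> \<in> E \<Longrightarrow> \<sigma> (of_int z) = of_int z"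
proof (cases "z \<ge> 0")
  case True
  assume s: "\<sigma> \<in> E"
  obtain k where "z = int k" using True nonneg_eq_int by blast
  thus ?thesis using emb_nat[OF s, of k] by simp
next
  case False
  assume s: "\<sigma> \<in> E"
  obtain k where k: "z = - int k" using False by (meson nonpos_int_cases not_le less_imp_le)
  have "of_nat k \<in> K" using K_rat[of "of_nat k"] by simp
  thus ?thesis using emb_nat[OF s, of k] emb_neg[OF s, of "of_nat k"] k by simp
qed

lemma emb_inverse: "\<sigma> \<in> E \<Longrightarrow> x \<in> K \<Longrightarrow> x \<noteq> 0 \<Longrightarrow> \<sigma> (inverse x) = inverse (\<sigma> x)"
proof -
  assume s: "\<sigma> \<in> E" and x: "x \<in> K" "x \<noteq> 0"
  have "\<sigma> x * \<sigma> (inverse x) = 1"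
    using emb_mult[OF s x(1) K_inverse[OF x(1)]] x(2) emb_one[OF s] by simp
  thus ?thesis by (simp add: inverse_unique)
qed

lemma emb_nonzero: "\<sigma> \<in> E \<Longrightarrow> x \<in> K \<Longrightarrow> x \<noteq> 0 \<Longrightarrow> \<sigma> x \<noteq> 0"
proof -
  assume s: "\<sigma> \<in> E" and x: "x \<in> K" "x \<noteq> 0"
  have "\<sigma> x * \<sigma> (inverse x) = 1"
    using emb_mult[OF s x(1) K_inverse[OF x(1)]] x(2) emb_one[OF s] by simp
  thus ?thesis by auto
qed

lemma emb_rat: "\<sigma> \<in> E \<Longrightarrow> \<sigma> (of_rat c) = of_rat c"
proof -
  assume s: "\<sigma> \<in> E"
  obtain a b where c: "c = Rat.Fract a b" and b: "b > 0" by (cases c) auto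
  have "of_rat c = (of_int a * inverse (of_int b) :: real)" using c b by (simp add: of_rat_rat divide_inverse)
  moreover have "of_int a \<in> K" "of_int b \<in> K" using K_rat[of "of_int a"] K_rat[of "of_int b"] by simp_all
  moreover have "(of_rat c :: complex) = of_int a * inverse (of_int b)" using c b by (simp add: of_rat_rat divide_inverse)
  ultimately show ?thesis
    using emb_mult[OF s, of "of_int a" "inverse (of_int b)"] emb_inverse[OF s, of "of_int b"] K_inverse
      emb_int[OF s] b by simp
qed

lemma emb_smult: "\<sigma> \<in> E \<Longrightarrow> x \<in> K \<Longrightarrow> \<sigma> (of_rat c * x) = of_rat c * \<sigma> x"
  using emb_mult[OF _ K_rat] emb_rat by simp

lemma emb_sum:
  assumes s: "\<sigma> \<in> E" shows "finite J \<Longrightarrow> (\<And>j. j \<in> J \<Longrightarrow> z j \<in> K) \<Longrightarrow> \<sigma> (\<Sum>j\<in>J. z j) = (\<Sum>j\<in>J. \<sigma> (z j))"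
proof (induction J rule: finite_induct)
  case empty thus ?case using emb_zero[OF s] by simp
next
  case (insert j J)
  thus ?case using emb_add[OF s, of "z j" "\<Sum>j\<in>J. z j"] K_sum[of J z] by simp
qed

lemma emb_lin: "\<sigma> \<in> E \<Longrightarrow> x \<in> K \<Longrightarrow> \<sigma> x = (\<Sum>i<n. of_rat (coord x i) * \<sigma> (al i))"
proof -
  assume s: "\<sigma> \<in> E" and x: "x \<in> K"
  have "\<sigma> x = \<sigma> (\<Sum>i<n. of_rat (coord x i) * al i)" using coord[OF x] by simp
  also have "\<dots> = (\<Sum>i<n. \<sigma> (of_rat (coord x i) * al i))"
    by (rule emb_sum[OF s]) (auto intro: K_smult K_al)
  also have "\<dots> = (\<Sum>i<n. of_rat (coord x i) * \<sigma> (al i))"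
    by (rule sum.cong) (auto intro: emb_smult[OF s] K_al)
  finally show ?thesis .
qed

lemma emb_eqI: "\<sigma> \<in> E \<Longrightarrow> \<tau> \<in> E \<Longrightarrow> (\<And>x. x \<in> K \<Longrightarrow> \<sigma> x = \<tau> x) \<Longrightarrow> \<sigma> = \<tau>"
  using emb_out by (intro ext) metis

lemma id_emb: "nf_id_emb K \<in> E"
  unfolding nf_embs_def nf_id_emb_def using K_add K_mult K_one by auto

definition cj :: "(real \<Rightarrow> complex) \<Rightarrow> real \<Rightarrow> complex" where "cj \<sigma> = (\<lambda>x. cnj (\<sigma> x))"

lemma cj_emb: "\<sigma> \<in> E \<Longrightarrow> cj \<sigma> \<in> E"
  unfolding nf_embs_def cj_def by auto
lemma cj_cj[simp]: "cj (cj \<sigma>) = \<sigma>"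
  unfolding cj_def by simp

end


lemma wide_dep:
  fixes f :: "nat \<Rightarrow> nat \<Rightarrow> 'a::field"
  assumes nk: "n < k"
  shows "\<exists>a. (\<exists>j<k. a j \<noteq> 0) \<and> (\<forall>i<n. (\<Sum>j<k. a j * f j i) = 0)"
proof -
  define B where "B = mat k k (\<lambda>(i,j). if i < n then f j i else 0)"
  have Bc: "B \<in> carrier_mat k k" unfolding B_def by simp
  have "B = mat\<^sub>r k k (\<lambda>i. if i = k - 1 then 0\<^sub>v k else row B i)"
    by (rule eq_matI) (use nk in \<open>auto simp: B_def\<close>)
  also have "det \<dots> = 0"
    by (rule det_row_0) (use nk in \<open>auto simp: B_def\<close>)
  finally have "det B = 0" .
  then obtain v where v: "v \<in> carrier_vec k" "v \<noteq> 0\<^sub>v k" "B *\<^sub>v v = 0\<^sub>v k"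
    using det_0_iff_vec_prod_zero_field[OF Bc] by blast
  have "\<exists>j<k. v $ j \<noteq> 0"
  proof (rule ccontr)
    assume "\<not> ?thesis"
    hence "v = 0\<^sub>v k" using v(1) by (intro eq_vecI) auto
    thus False using v(2) by simp
  qed
  moreover have "\<forall>i<n. (\<Sum>j<k. v $ j * f j i) = 0"
  proof (intro allI impI)
    fix i assume i: "i < n"
    have "(B *\<^sub>v v) $ i = 0" using v(3) i nk by simp
    hence "(\<Sum>j\<in>{0..<k}. f j i * v $ j) = 0"
      using i nk v(1) by (simp add: B_def scalar_prod_def)
    thus "(\<Sum>j<k. v $ j * f j i) = 0" by (simp add: atLeast0LessThan mult.commute)
  qed
  ultimately show ?thesis by blast
qed

context nfb begin

lemma emb_distinct: "\<sigma> \<in> E \<Longrightarrow> \<tau> \<in> E \<Longrightarrow> \<sigma> \<noteq> \<tau> \<Longrightarrow> \<exists>y\<in>K. \<sigma> y \<noteq> \<tau> y"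
  using emb_eqI by blast

lemma dedekind:
  assumes "finite F" "F \<subseteq> E" "\<And>x. x \<in> K \<Longrightarrow> (\<Sum>\<sigma>\<in>F. a \<sigma> * \<sigma> x) = 0"
  shows "\<forall>\<sigma>\<in>F. a \<sigma> = 0"
  using assms
proof (induction F arbitrary: a rule: finite_induct)
  case empty thus ?case by simp
next
  case (insert \<tau> F)
  have tE: "\<tau> \<in> E" and FE: "F \<subseteq> E" using insert.prems(1) by auto
  have rel: "(\<Sum>\<sigma>\<in>F. a \<sigma> * \<sigma> x) + a \<tau> * \<tau> x = 0" if "x \<in> K" for x
    using insert.prems(2)[OF that] insert.hyps by (simp add: add.commute)
  have F0: "\<forall>\<sigma>\<in>F. a \<sigma> * (\<sigma> y - \<tau> y) = 0" if y: "y \<in> K" for y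
  proof (rule insert.IH[OF FE])
    fix x assume x: "x \<in> K"
    have "(\<Sum>\<sigma>\<in>F. a \<sigma> * (\<sigma> y - \<tau> y) * \<sigma> x)
        = (\<Sum>\<sigma>\<in>F. a \<sigma> * \<sigma> (y * x)) - \<tau> y * (\<Sum>\<sigma>\<in>F. a \<sigma> * \<sigma> x)"
      using FE x y
      by (auto simp: sum_distrib_left sum_subtractf[symmetric] algebra_simps emb_mult intro!: sum.cong)
    also have "\<dots> = - a \<tau> * \<tau> (y * x) + \<tau> y * (a \<tau> * \<tau> x)"
    proof -
      have r1: "(\<Sum>\<sigma>\<in>F. a \<sigma> * \<sigma> (y*x)) = - (a \<tau> * \<tau> (y*x))"
        using rel[OF K_mult[OF y x]] by (simp add: eq_neg_iff_add_eq_0)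
      have r2: "(\<Sum>\<sigma>\<in>F. a \<sigma> * \<sigma> x) = - (a \<tau> * \<tau> x)"
        using rel[OF x] by (simp add: eq_neg_iff_add_eq_0)
      show ?thesis unfolding r1 r2 by simp
    qed
    also have "\<dots> = 0" using emb_mult[OF tE y x] by simp
    finally show "(\<Sum>\<sigma>\<in>F. a \<sigma> * (\<sigma> y - \<tau> y) * \<sigma> x) = 0" .
  qed
  have aF: "\<forall>\<sigma>\<in>F. a \<sigma> = 0"
  proof
    fix \<sigma> assume s: "\<sigma> \<in> F"
    have "\<sigma> \<noteq> \<tau>" using s insert.hyps by auto
    then obtain y where y: "y \<in> K" "\<sigma> y \<noteq> \<tau> y" using emb_distinct[OF _ tE] s FE by blast
    show "a \<sigma> = 0" using F0[OF y(1)] s y(2) by auto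
  qed
  have "a \<tau> * \<tau> 1 = 0" using rel[OF K_one] aF by simp
  hence "a \<tau> = 0" using emb_one[OF tE] by simp
  thus ?case using aF by simp
qed

lemma E_finite_card: "finite E \<and> card E \<le> n"
proof (rule ccontr)
  assume "\<not> ?thesis"
  have "\<exists>F. F \<subseteq> E \<and> finite F \<and> card F = Suc n"
  proof (cases "finite E")
    case True
    hence "Suc n \<le> card E" using \<open>\<not> (finite E \<and> card E \<le> n)\<close> by simp
    then obtain F where "F \<subseteq> E" "card F = Suc n" "finite F" by (rule obtain_subset_with_card_n)
    thus ?thesis by blast
  next
    case False
    show ?thesis using infinite_arbitrarily_large[OF False] by blast
  qed
  then obtain F where F: "F \<subseteq> E" "finite F" "card F = Suc n" by blast
  then obtain g where g: "bij_betw g {..<Suc n} F"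
    using ex_bij_betw_nat_finite[of F] by (metis atLeast0LessThan)
  obtain a where a: "\<exists>j<Suc n. a j \<noteq> 0" "\<forall>i<n. (\<Sum>j<Suc n. a j * g j (al i)) = 0"
    using wide_dep[of n "Suc n" "\<lambda>j i. g j (al i)"] by auto
  have gE: "g j \<in> E" if "j < Suc n" for j using g F(1) that bij_betwE by blast
  have "\<forall>\<sigma>\<in>F. (a \<circ> inv_into {..<Suc n} g) \<sigma> = 0"
  proof (rule dedekind[OF F(2) F(1)])
    fix x assume x: "x \<in> K"
    have "(\<Sum>\<sigma>\<in>F. (a \<circ> inv_into {..<Suc n} g) \<sigma> * \<sigma> x) = (\<Sum>j<Suc n. a j * g j x)"
      using sum.reindex_bij_betw[OF g, of "\<lambda>\<sigma>. (a \<circ> inv_into {..<Suc n} g) \<sigma> * \<sigma> x"]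
        bij_betw_inv_into_left[OF g] by (auto intro: sum.cong)
    also have "\<dots> = (\<Sum>j<Suc n. a j * (\<Sum>i<n. of_rat (coord x i) * g j (al i)))"
      by (rule sum.cong) (auto simp: emb_lin[OF gE x] simp del: sum.lessThan_Suc)
    also have "\<dots> = (\<Sum>i<n. of_rat (coord x i) * (\<Sum>j<Suc n. a j * g j (al i)))"
      by (simp add: sum_distrib_left algebra_simps del: sum.lessThan_Suc) (rule sum.swap)
    also have "\<dots> = 0" using a(2) by simp
    finally show "(\<Sum>\<sigma>\<in>F. (a \<circ> inv_into {..<Suc n} g) \<sigma> * \<sigma> x) = 0" .
  qed
  then obtain j where "j < Suc n" "a j \<noteq> 0" using a(1) by blast
  moreover have "g j \<in> F" using g \<open>j < Suc n\<close> bij_betwE by blast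
  ultimately show False using \<open>\<forall>\<sigma>\<in>F. _\<close> bij_betw_inv_into_left[OF g] by force
qed

end


definition rap :: "nat \<Rightarrow> (nat \<Rightarrow> nat \<Rightarrow> complex) \<Rightarrow> (nat \<Rightarrow> complex) \<Rightarrow> nat \<Rightarrow> complex" where
  "rap n T v = (\<lambda>k. if k < n then (\<Sum>i<n. v i * T i k) else 0)"

lemma rap_add: "rap n T (\<lambda>k. u k + v k) = (\<lambda>k. rap n T u k + rap n T v k)"
  unfolding rap_def by (auto simp: sum.distrib distrib_right)

lemma rap_smult: "rap n T (\<lambda>k. c * v k) = (\<lambda>k. c * rap n T v k)"
  unfolding rap_def by (auto simp: sum_distrib_left mult.assoc)

lemma rap_sum: "rap n T (\<lambda>k. \<Sum>j\<in>J. f j k) = (\<lambda>k. \<Sum>j\<in>J. rap n T (f j) k)"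
proof (rule ext)
  fix k
  show "rap n T (\<lambda>k. \<Sum>j\<in>J. f j k) k = (\<Sum>j\<in>J. rap n T (f j) k)"
  proof (cases "k < n")
    case True
    have "(\<Sum>i<n. (\<Sum>j\<in>J. f j i) * T i k) = (\<Sum>j\<in>J. \<Sum>i<n. f j i * T i k)"
      unfolding sum_distrib_right by (rule sum.swap)
    thus ?thesis using True unfolding rap_def by simp
  qed (simp add: rap_def)
qed

definition phi :: "nat \<Rightarrow> (nat \<Rightarrow> nat \<Rightarrow> complex) \<Rightarrow> (nat \<Rightarrow> complex) \<Rightarrow> complex poly \<Rightarrow> nat \<Rightarrow> complex" where
  "phi n T u p = (\<lambda>k. \<Sum>j\<le>degree p. coeff p j * (rap n T ^^ j) u k)"

lemma phi_range: "degree p \<le> N \<Longrightarrow> phi n T u p = (\<lambda>k. \<Sum>j\<le>N. coeff p j * (rap n T ^^ j) u k)"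
  unfolding phi_def
  by (intro ext sum.mono_neutral_left) (auto simp: coeff_eq_0)

lemma phi_add: "phi n T u (p + q) = (\<lambda>k. phi n T u p k + phi n T u q k)"
proof -
  let ?N = "max (degree p) (degree q)"
  have "degree (p + q) \<le> ?N" by (rule degree_add_le_max)
  thus ?thesis
    using phi_range[of "p+q" ?N] phi_range[of p ?N] phi_range[of q ?N]
    by (simp add: sum.distrib distrib_right)
qed

lemma phi_smult: "phi n T u (Polynomial.smult c p) = (\<lambda>k. c * phi n T u p k)"
  using phi_range[of "Polynomial.smult c p" "degree p"] phi_range[of p "degree p"]
  by (simp add: sum_distrib_left mult.assoc)

lemma phi_pCons0: "phi n T u (pCons 0 p) = rap n T (phi n T u p)"
proof -
  have "degree (pCons 0 p) \<le> Suc (degree p)" by (rule degree_pCons_le)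
  hence "phi n T u (pCons 0 p) = (\<lambda>k. \<Sum>j\<le>Suc (degree p). coeff (pCons 0 p) j * (rap n T ^^ j) u k)"
    by (rule phi_range)
  also have "\<dots> = (\<lambda>k. \<Sum>j\<le>degree p. coeff p j * (rap n T ^^ Suc j) u k)"
    by (subst sum.atMost_Suc_shift) simp
  also have "\<dots> = rap n T (phi n T u p)"
    unfolding phi_def rap_sum rap_smult by simp
  finally show ?thesis .
qed

lemma phi_lin: "phi n T u ([:-z, 1:] * p) = (\<lambda>k. rap n T (phi n T u p) k - z * phi n T u p k)"
proof -
  have "[:-z, 1:] * p = pCons 0 p + Polynomial.smult (-z) p" by (simp add: mult_pCons_left)
  show ?thesis unfolding \<open>[:-z, 1:] * p = _\<close> phi_add phi_smult phi_pCons0 by simp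
qed

lemma phi_one: "phi n T u 1 = u"
  unfolding phi_def by simp

lemma EV:
  fixes T :: "nat \<Rightarrow> nat \<Rightarrow> complex" and W :: "(nat \<Rightarrow> complex) \<Rightarrow> bool"
  assumes Wadd: "\<And>u v. W u \<Longrightarrow> W v \<Longrightarrow> W (\<lambda>k. u k + v k)"
    and Wsmult: "\<And>c v. W v \<Longrightarrow> W (\<lambda>k. c * v k)"
    and Wrap: "\<And>v. W v \<Longrightarrow> W (rap n T v)"
    and Wsupp: "\<And>v k. W v \<Longrightarrow> n \<le> k \<Longrightarrow> v k = 0"
    and w: "W w" "w \<noteq> (\<lambda>_. 0)"
  shows "\<exists>v \<mu>. W v \<and> v \<noteq> (\<lambda>_. 0) \<and> rap n T v = (\<lambda>k. \<mu> * v k)"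
proof -
  have W0: "W (\<lambda>_. 0)" using Wsmult[OF w(1), of 0] by simp
  have Wpow: "W ((rap n T ^^ j) u)" if "W u" for u j
    using that by (induction j) (auto intro: Wrap)
  have Wsum: "W (\<lambda>k. \<Sum>j\<in>J. f j k)" if "finite J" "\<And>j. j \<in> J \<Longrightarrow> W (f j)" for J f
    using that by (induction J rule: finite_induct) (auto intro: W0 Wadd)
  have Wphi: "W (phi n T u p)" if "W u" for u p
    unfolding phi_def by (rule Wsum) (auto intro: Wsmult Wpow that)
  have key: "\<And>u. W u \<Longrightarrow> u \<noteq> (\<lambda>_. 0) \<Longrightarrow> phi n T u (\<Prod>a\<leftarrow>as. [:- a, 1:]) = (\<lambda>_. 0) \<Longrightarrow>
      \<exists>v \<mu>. W v \<and> v \<noteq> (\<lambda>_. 0) \<and> rap n T v = (\<lambda>k. \<mu> * v k)" for as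
  proof (induction as)
    case Nil thus ?case using phi_one by simp
  next
    case (Cons a as)
    let ?u' = "phi n T u (\<Prod>a\<leftarrow>as. [:- a, 1:])"
    show ?case
    proof (cases "?u' = (\<lambda>_. 0)")
      case True thus ?thesis using Cons.IH Cons.prems by blast
    next
      case False
      have "phi n T u ([:- a, 1:] * (\<Prod>a\<leftarrow>as. [:- a, 1:])) = (\<lambda>_. 0)"
        using Cons.prems(3) by simp
      hence "(\<lambda>k. rap n T ?u' k - a * ?u' k) = (\<lambda>_. 0)"
        by (simp only: phi_lin)
      hence "rap n T ?u' = (\<lambda>k. a * ?u' k)" by (simp add: fun_eq_iff)
      thus ?thesis using Wphi[OF Cons.prems(1)] False by blast
    qed
  qed
  define kr where "kr j = (rap n T ^^ j) w" for j
  obtain a where a: "\<exists>j<Suc n. a j \<noteq> 0" "\<forall>i<n. (\<Sum>j<Suc n. a j * kr j i) = 0"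
    using wide_dep[of n "Suc n" kr] by auto
  define p where "p = (\<Sum>j<Suc n. monom (a j) j)"
  have cp: "coeff p j = (if j < Suc n then a j else 0)" for j
    unfolding p_def by (simp add: coeff_sum)
  have dp: "degree p \<le> n"
    by (rule degree_le) (auto simp: cp)
  have p0: "p \<noteq> 0" using a(1) cp by (metis coeff_0)
  have "phi n T w p = (\<lambda>k. \<Sum>j\<le>n. coeff p j * kr j k)"
    using phi_range[OF dp] unfolding kr_def by simp
  also have "\<dots> = (\<lambda>k. \<Sum>j<Suc n. a j * kr j k)"
    by (intro ext sum.cong) (auto simp: cp)
  also have "\<dots> = (\<lambda>_. 0)"
  proof
    fix k show "(\<Sum>j<Suc n. a j * kr j k) = 0"
    proof (cases "k < n")
      case True thus ?thesis using a(2) by simp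
    next
      case False
      have "kr j k = 0" for j unfolding kr_def using Wsupp[OF Wpow[OF w(1)]] False by simp
      thus ?thesis by simp
    qed
  qed
  finally have phip: "phi n T w p = (\<lambda>_. 0)" .
  obtain as where as: "Polynomial.smult (coeff p (degree p)) (\<Prod>a\<leftarrow>as. [:- a, 1:]) = p"
    using fundamental_theorem_algebra_factorized[of p] by blast
  have lc: "coeff p (degree p) \<noteq> 0" using p0 by simp
  have "(\<lambda>k. coeff p (degree p) * phi n T w (\<Prod>a\<leftarrow>as. [:- a, 1:]) k) = (\<lambda>_. 0)"
  proof -
    have "phi n T w (Polynomial.smult (coeff p (degree p)) (\<Prod>a\<leftarrow>as. [:- a, 1:])) = (\<lambda>_. 0)"
      using phip as by simp
    thus ?thesis by (simp only: phi_smult)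
  qed
  hence "phi n T w (\<Prod>a\<leftarrow>as. [:- a, 1:]) = (\<lambda>_. 0)" using lc by (simp add: fun_eq_iff)
  thus ?thesis using key w by blast
qed


context nfb begin

definition Amat :: "real \<Rightarrow> nat \<Rightarrow> nat \<Rightarrow> rat" where "Amat x i k = coord (x * al i) k"

lemma Amat_expand: "x \<in> K \<Longrightarrow> i < n \<Longrightarrow> x * al i = (\<Sum>k<n. of_rat (Amat x i k) * al k)"
  unfolding Amat_def by (rule coord) (auto intro: K_mult K_al)

lemma Amat_emb: "\<sigma> \<in> E \<Longrightarrow> x \<in> K \<Longrightarrow> i < n \<Longrightarrow> \<sigma> x * \<sigma> (al i) = (\<Sum>k<n. of_rat (Amat x i k) * \<sigma> (al k))"
  unfolding Amat_def using emb_mult[of \<sigma> x "al i"] emb_lin[of \<sigma> "x * al i"] K_al K_mult by simp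

lemma Amat_lin:
  assumes "finite J" "\<And>j. j \<in> J \<Longrightarrow> z j \<in> K" "i < n" "k < n"
  shows "Amat (\<Sum>j\<in>J. of_rat (b j) * z j) i k = (\<Sum>j\<in>J. b j * Amat (z j) i k)"
proof -
  have "(\<Sum>j\<in>J. of_rat (b j) * z j) * al i = (\<Sum>j\<in>J. of_rat (b j) * (z j * al i))"
    by (simp add: sum_distrib_right mult.assoc)
  thus ?thesis unfolding Amat_def
    using coord_lin[OF assms(1), of "\<lambda>j. z j * al i" k b] assms K_mult K_al by simp
qed

lemma Amat_coord: "x \<in> K \<Longrightarrow> i < n \<Longrightarrow> k < n \<Longrightarrow> Amat x i k = (\<Sum>j<n. coord x j * Amat (al j) i k)"
  using Amat_lin[of "{..<n}" al i k "coord x"] coord[of x] K_al by simp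

lemma Amat_mult: "x \<in> K \<Longrightarrow> y \<in> K \<Longrightarrow> i < n \<Longrightarrow> k < n \<Longrightarrow>
    Amat (x * y) i k = (\<Sum>l<n. Amat y i l * Amat x l k)"
proof -
  assume x: "x \<in> K" and y: "y \<in> K" and i: "i < n" and k: "k < n"
  have "x * y * al i = x * (\<Sum>l<n. of_rat (Amat y i l) * al l)"
    using Amat_expand[OF y i] by (simp add: mult.assoc)
  also have "\<dots> = (\<Sum>l<n. of_rat (Amat y i l) * (x * al l))"
    by (simp add: sum_distrib_left algebra_simps del: sum.lessThan_Suc)
  finally have "coord (x * y * al i) k = coord (\<Sum>l<n. of_rat (Amat y i l) * (x * al l)) k" by simp
  also have "\<dots> = (\<Sum>l<n. Amat y i l * coord (x * al l) k)"
    by (rule coord_lin) (auto intro: K_mult K_al x k)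
  finally show ?thesis unfolding Amat_def .
qed

lemma Amat_one: "i < n \<Longrightarrow> k < n \<Longrightarrow> Amat 1 i k = (if k = i then 1 else 0)"
  unfolding Amat_def by (simp add: coord_al)

lemma Amat_al_comm: "Amat (al j) i k = Amat (al i) j k"
  by (simp add: Amat_def mult.commute)

definition TA :: "real \<Rightarrow> nat \<Rightarrow> nat \<Rightarrow> complex" where "TA x i k = of_rat (Amat x i k)"

definition Iset :: "(nat \<Rightarrow> complex) \<Rightarrow> bool" where
  "Iset v \<longleftrightarrow> (\<forall>k. n \<le> k \<longrightarrow> v k = 0) \<and> (\<forall>\<sigma>\<in>E. (\<Sum>i<n. v i * \<sigma> (al i)) = 0)"

lemma rap_mult: "x \<in> K \<Longrightarrow> y \<in> K \<Longrightarrow> rap n (TA (x * y)) v = rap n (TA x) (rap n (TA y) v)"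
proof (rule ext)
  fix k assume x: "x \<in> K" and y: "y \<in> K"
  show "rap n (TA (x * y)) v k = rap n (TA x) (rap n (TA y) v) k"
  proof (cases "k < n")
    case True
    have "(\<Sum>i<n. v i * TA (x * y) i k) = (\<Sum>i<n. \<Sum>l<n. v i * TA y i l * TA x l k)"
      by (rule sum.cong) (auto simp: TA_def Amat_mult[OF x y _ True] of_rat_sum of_rat_mult
          sum_distrib_left mult.assoc simp del: sum.lessThan_Suc)
    also have "\<dots> = (\<Sum>l<n. (\<Sum>i<n. v i * TA y i l) * TA x l k)"
      by (subst sum.swap) (simp add: sum_distrib_right del: sum.lessThan_Suc)
    finally show ?thesis using True unfolding rap_def by simp
  qed (simp add: rap_def)
qed

lemma Iset_add: "Iset u \<Longrightarrow> Iset v \<Longrightarrow> Iset (\<lambda>k. u k + v k)"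
  unfolding Iset_def by (simp add: distrib_right sum.distrib del: sum.lessThan_Suc)

lemma Iset_smult: "Iset v \<Longrightarrow> Iset (\<lambda>k. c * v k)"
  unfolding Iset_def by (simp add: sum_distrib_left[symmetric] mult.assoc del: sum.lessThan_Suc)

lemma Iset_rap: "Iset v \<Longrightarrow> x \<in> K \<Longrightarrow> Iset (rap n (TA x) v)"
proof -
  assume v: "Iset v" and x: "x \<in> K"
  have "(\<Sum>k<n. rap n (TA x) v k * \<sigma> (al k)) = 0" if s: "\<sigma> \<in> E" for \<sigma>
  proof -
    have "(\<Sum>k<n. rap n (TA x) v k * \<sigma> (al k)) = (\<Sum>k<n. \<Sum>i<n. v i * TA x i k * \<sigma> (al k))"
      by (rule sum.cong) (auto simp: rap_def sum_distrib_right simp del: sum.lessThan_Suc)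
    also have "\<dots> = (\<Sum>i<n. v i * (\<Sum>k<n. of_rat (Amat x i k) * \<sigma> (al k)))"
      by (subst sum.swap) (simp add: sum_distrib_left TA_def mult.assoc del: sum.lessThan_Suc)
    also have "\<dots> = (\<Sum>i<n. v i * (\<sigma> x * \<sigma> (al i)))"
      by (rule sum.cong) (auto simp: Amat_emb[OF s x] simp del: sum.lessThan_Suc)
    also have "\<dots> = \<sigma> x * (\<Sum>i<n. v i * \<sigma> (al i))"
      by (simp add: sum_distrib_left algebra_simps del: sum.lessThan_Suc)
    also have "\<dots> = 0" using v s unfolding Iset_def by simp
    finally show ?thesis .
  qed
  thus ?thesis unfolding Iset_def by (simp add: rap_def)
qed

lemma joint:
  assumes w: "Iset w" "w \<noteq> (\<lambda>_. 0)"
  shows "j \<le> n \<Longrightarrow> \<exists>v lam. Iset v \<and> v \<noteq> (\<lambda>_. 0) \<and> (\<forall>l<j. rap n (TA (al l)) v = (\<lambda>k. lam l * v k))"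
proof (induction j)
  case 0 thus ?case using w by blast
next
  case (Suc j)
  then obtain v lam where v: "Iset v" "v \<noteq> (\<lambda>_. 0)" "\<forall>l<j. rap n (TA (al l)) v = (\<lambda>k. lam l * v k)"
    by auto
  have j: "j < n" using Suc.prems by simp
  define W where "W u \<longleftrightarrow> Iset u \<and> (\<forall>l<j. rap n (TA (al l)) u = (\<lambda>k. lam l * u k))" for u
  have comm: "rap n (TA (al l)) (rap n (TA (al j)) u) = rap n (TA (al j)) (rap n (TA (al l)) u)"
    if "l < j" for l u
    using rap_mult[OF K_al K_al, of l j u] rap_mult[OF K_al K_al, of j l u] j that
    by (simp add: mult.commute)
  obtain v' \<mu> where v': "W v'" "v' \<noteq> (\<lambda>_. 0)" "rap n (TA (al j)) v' = (\<lambda>k. \<mu> * v' k)"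
  proof -
    have "\<exists>v' \<mu>. W v' \<and> v' \<noteq> (\<lambda>_. 0) \<and> rap n (TA (al j)) v' = (\<lambda>k. \<mu> * v' k)"
    proof (rule EV[of W])
      show "W (\<lambda>k. u k + v k)" if "W u" "W v" for u v
        using that unfolding W_def by (auto simp: Iset_add rap_add algebra_simps)
      show "W (\<lambda>k. c * v k)" if "W v" for c v
        using that unfolding W_def by (auto simp: Iset_smult rap_smult)
      show "W (rap n (TA (al j)) v)" if "W v" for v
        using that unfolding W_def by (auto simp: Iset_rap K_al j comm rap_smult)
      show "v k = 0" if "W v" "n \<le> k" for v k
        using that unfolding W_def Iset_def by auto
      show "W v" using v unfolding W_def by auto
      show "v \<noteq> (\<lambda>_. 0)" by (rule v(2))
    qed
    thus ?thesis using that by blast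
  qed
  show ?case
  proof (intro exI conjI)
    show "Iset v'" using v' unfolding W_def by auto
    show "v' \<noteq> (\<lambda>_. 0)" by (rule v'(2))
    show "\<forall>l<Suc j. rap n (TA (al l)) v' = (\<lambda>k. (lam(j := \<mu>)) l * v' k)"
      using v' unfolding W_def by (auto simp: less_Suc_eq)
  qed
qed

end


context nfb begin

definition Gm :: "nat \<Rightarrow> nat \<Rightarrow> rat" where "Gm j m = (\<Sum>k<n. Amat (al j * al m) k k)"

lemma G_rat_nondeg:
  assumes a: "\<forall>m<n. (\<Sum>j<n. a j * Gm j m) = 0"
  shows "\<forall>j<n. a j = 0"
proof (rule ccontr)
  assume na: "\<not> ?thesis"
  define x where "x = (\<Sum>j<n. of_rat (a j) * al j)"
  have xK: "x \<in> K" unfolding x_def by (rule K_I[of _ a]) simp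
  have x0: "x \<noteq> 0"
  proof
    assume "x = 0"
    hence "a j = 0" if "j < n" for j using indep[of a j] that unfolding x_def by simp
    thus False using na by blast
  qed
  have trx: "(\<Sum>k<n. Amat (x * al m) k k) = 0" if m: "m < n" for m
  proof -
    have xm: "x * al m = (\<Sum>j<n. of_rat (a j) * (al j * al m))"
      unfolding x_def by (simp add: sum_distrib_right mult.assoc del: sum.lessThan_Suc)
    have "(\<Sum>k<n. Amat (x * al m) k k) = (\<Sum>k<n. \<Sum>j<n. a j * Amat (al j * al m) k k)"
      unfolding xm using m by (intro sum.cong refl Amat_lin) (auto intro: K_mult K_al simp del: sum.lessThan_Suc)
    also have "\<dots> = (\<Sum>j<n. a j * Gm j m)"
      unfolding Gm_def by (subst sum.swap) (simp add: sum_distrib_left del: sum.lessThan_Suc)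
    finally show ?thesis using a m by simp
  qed
  define y where "y = inverse x"
  have yK: "y \<in> K" unfolding y_def by (rule K_inverse[OF xK])
  have "x * y = 1" unfolding y_def using x0 by simp
  have xy: "x * y = (\<Sum>m<n. of_rat (coord y m) * (x * al m))"
    apply (subst coord[OF yK])
    by (simp add: sum_distrib_left algebra_simps del: sum.lessThan_Suc)
  have "(\<Sum>k<n. Amat (x * y) k k) = (\<Sum>k<n. \<Sum>m<n. coord y m * Amat (x * al m) k k)"
    unfolding xy by (rule sum.cong) (auto intro!: Amat_lin intro: K_mult K_al xK simp del: sum.lessThan_Suc)
  also have "\<dots> = (\<Sum>m<n. coord y m * (\<Sum>k<n. Amat (x * al m) k k))"
    by (subst sum.swap) (simp add: sum_distrib_left del: sum.lessThan_Suc)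
  also have "\<dots> = 0" using trx by simp
  finally have "(\<Sum>k<n. Amat 1 k k) = 0" using \<open>x * y = 1\<close> by simp
  moreover have "(\<Sum>k<n. Amat 1 k k) = of_nat n"
    by (simp add: Amat_one del: sum.lessThan_Suc)
  ultimately show False by simp
qed

lemma G_nondeg:
  assumes c: "\<forall>m<n. (\<Sum>j<n. c j * of_rat (Gm j m)) = (0::complex)"
  shows "\<forall>j<n. c j = 0"
proof -
  define Gq where "Gq = mat n n (\<lambda>(j,m). Gm j m)"
  have Gq: "Gq \<in> carrier_mat n n" unfolding Gq_def by simp
  have dGq: "det Gq \<noteq> 0"
  proof
    assume "det Gq = 0"
    hence "det (transpose_mat Gq) = 0" using det_transpose[OF Gq] by simp
    then obtain a where a: "a \<in> carrier_vec n" "a \<noteq> 0\<^sub>v n" "transpose_mat Gq *\<^sub>v a = 0\<^sub>v n"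
      using det_0_iff_vec_prod_zero_field[of "transpose_mat Gq" n] Gq by auto
    have "\<forall>m<n. (\<Sum>j<n. a $ j * Gm j m) = 0"
    proof (intro allI impI)
      fix m assume m: "m < n"
      have "(transpose_mat Gq *\<^sub>v a) $ m = 0" using a(3) m by simp
      thus "(\<Sum>j<n. a $ j * Gm j m) = 0"
        using m a(1) Gq by (simp add: Gq_def scalar_prod_def atLeast0LessThan mult.commute)
    qed
    hence "\<forall>j<n. a $ j = 0" by (rule G_rat_nondeg)
    hence "a = 0\<^sub>v n" using a(1) by (intro eq_vecI) auto
    thus False using a(2) by simp
  qed
  define Gc where "Gc = map_mat (of_rat :: rat \<Rightarrow> complex) Gq"
  have Gc: "Gc \<in> carrier_mat n n" unfolding Gc_def using Gq by simp
  have "det Gc \<noteq> 0" unfolding Gc_def using dGq by simp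
  hence dGc: "det (transpose_mat Gc) \<noteq> 0" using det_transpose[OF Gc] by simp
  define cv where "cv = vec n c"
  have "transpose_mat Gc *\<^sub>v cv = 0\<^sub>v n"
  proof (rule eq_vecI)
    fix m assume "m < dim_vec (0\<^sub>v n :: complex vec)"
    hence m: "m < n" by simp
    have "(transpose_mat Gc *\<^sub>v cv) $ m = (\<Sum>j<n. c j * of_rat (Gm j m))"
      using m Gq by (simp add: Gc_def Gq_def cv_def scalar_prod_def atLeast0LessThan mult.commute)
    thus "(transpose_mat Gc *\<^sub>v cv) $ m = 0\<^sub>v n $ m" using c m by simp
  qed (use Gc in simp)
  moreover have "cv \<in> carrier_vec n" unfolding cv_def by simp
  ultimately have "cv = 0\<^sub>v n"
    using dGc det_0_iff_vec_prod_zero_field[of "transpose_mat Gc" n] Gc by auto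
  thus ?thesis unfolding cv_def by (metis index_vec index_zero_vec(1))
qed

end


lemma sum_swap3: "(\<Sum>j\<in>A. \<Sum>k\<in>B. \<Sum>l\<in>C. f j k l) = (\<Sum>k\<in>B. \<Sum>l\<in>C. \<Sum>j\<in>A. f j k l)"
proof -
  have "(\<Sum>j\<in>A. \<Sum>k\<in>B. \<Sum>l\<in>C. f j k l) = (\<Sum>k\<in>B. \<Sum>j\<in>A. \<Sum>l\<in>C. f j k l)" by (rule sum.swap)
  also have "\<dots> = (\<Sum>k\<in>B. \<Sum>l\<in>C. \<Sum>j\<in>A. f j k l)" by (rule sum.cong[OF refl], rule sum.swap)
  finally show ?thesis .
qed

context nfb begin

lemma card_E_ge: "n \<le> card E"
proof (rule ccontr)
  assume "\<not> n \<le> card E"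
  hence kn: "card E < n" by simp
  have fin: "finite E" using E_finite_card by simp
  obtain g where g: "bij_betw g {..<card E} E"
    using ex_bij_betw_nat_finite[OF fin] by (metis atLeast0LessThan)
  obtain a where a: "\<exists>i<n. a i \<noteq> 0" "\<forall>j<card E. (\<Sum>i<n. a i * g j (al i)) = 0"
    using wide_dep[OF kn, of "\<lambda>i j. g j (al i)"] by auto
  define w where "w i = (if i < n then a i else 0)" for i
  have Iw: "Iset w"
    unfolding Iset_def
  proof (intro conjI allI impI ballI)
    fix \<sigma> assume "\<sigma> \<in> E"
    then obtain j where j: "j < card E" "\<sigma> = g j" using g by (metis bij_betw_iff_bijections lessThan_iff)
    show "(\<Sum>i<n. w i * \<sigma> (al i)) = 0" using a(2) j by (simp add: w_def)
  qed (simp add: w_def)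
  have w0: "w \<noteq> (\<lambda>_. 0)" using a(1) unfolding w_def by (metis)
  obtain v lam where v: "Iset v" "v \<noteq> (\<lambda>_. 0)" "\<forall>l<n. rap n (TA (al l)) v = (\<lambda>k. lam l * v k)"
    using joint[OF Iw w0, of n] by auto
  obtain k0 where k0: "v k0 \<noteq> 0" using v(2) by auto
  define \<chi> where "\<chi> x = (\<Sum>j<n. of_rat (coord x j) * lam j)" for x
  have X1: "rap n (TA x) v = (\<lambda>k. \<chi> x * v k)" if x: "x \<in> K" for x
  proof (rule ext)
    fix k show "rap n (TA x) v k = \<chi> x * v k"
    proof (cases "k < n")
      case True
      have "(\<Sum>i<n. v i * TA x i k) = (\<Sum>i<n. \<Sum>j<n. of_rat (coord x j) * (v i * TA (al j) i k))"
        by (rule sum.cong) (auto simp: TA_def Amat_coord[OF x _ True] of_rat_sum of_rat_mult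
            sum_distrib_left algebra_simps simp del: sum.lessThan_Suc)
      also have "\<dots> = (\<Sum>j<n. of_rat (coord x j) * rap n (TA (al j)) v k)"
        by (subst sum.swap) (simp add: rap_def True sum_distrib_left del: sum.lessThan_Suc)
      also have "\<dots> = (\<Sum>j<n. of_rat (coord x j) * (lam j * v k))"
        by (rule sum.cong) (use v(3) in auto)
      also have "\<dots> = \<chi> x * v k"
        unfolding \<chi>_def by (simp add: sum_distrib_right mult.assoc del: sum.lessThan_Suc)
      finally show ?thesis using True by (simp add: rap_def)
    next
      case False
      thus ?thesis using v(1) unfolding Iset_def rap_def by simp
    qed
  qed
  have X2: "\<chi> (x * y) = \<chi> x * \<chi> y" if x: "x \<in> K" and y: "y \<in> K" for x y
  proof -
    have "\<chi> (x * y) * v k0 = rap n (TA x) (rap n (TA y) v) k0"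
      using X1[OF K_mult[OF x y]] rap_mult[OF x y, of v] by metis
    also have "\<dots> = \<chi> x * \<chi> y * v k0"
      unfolding X1[OF y] rap_smult X1[OF x] by simp
    finally show ?thesis using k0 by simp
  qed
  have X3: "\<chi> (x + y) = \<chi> x + \<chi> y" if x: "x \<in> K" and y: "y \<in> K" for x y
    unfolding \<chi>_def by (simp add: coord_add[OF x y] of_rat_add distrib_right sum.distrib del: sum.lessThan_Suc)
  have X4: "\<chi> 1 = 1"
  proof -
    have "rap n (TA 1) v = v"
    proof (rule ext)
      fix k show "rap n (TA 1) v k = v k"
      proof (cases "k < n")
        case True
        have "(\<Sum>i<n. v i * TA 1 i k) = (\<Sum>i<n. if i = k then v i else 0)"
          by (rule sum.cong) (auto simp: TA_def Amat_one True)
        thus ?thesis using True by (simp add: rap_def)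
      qed (use v(1) in \<open>simp add: rap_def Iset_def\<close>)
    qed
    hence "\<chi> 1 * v k0 = v k0" using X1[OF K_one] by metis
    thus ?thesis using k0 by simp
  qed
  define s\<chi> where "s\<chi> x = (if x \<in> K then \<chi> x else 0)" for x
  have sE: "s\<chi> \<in> E"
    unfolding nf_embs_def s\<chi>_def using X2 X3 X4 K_add K_mult K_one by auto
  have X5: "\<chi> (al i) = lam i" if "i < n" for i
  proof -
    have "\<chi> (al i) = (\<Sum>j<n. if j = i then lam j else 0)"
      unfolding \<chi>_def by (rule sum.cong) (auto simp: coord_al that)
    thus ?thesis using that by simp
  qed
  have "\<forall>m<n. (\<Sum>j<n. v j * of_rat (Gm j m)) = 0"
  proof (intro allI impI)
    fix m assume m: "m < n"
    have "(\<Sum>j<n. v j * of_rat (Gm j m)) = (\<Sum>j<n. \<Sum>k<n. \<Sum>l<n. v j * (TA (al m) k l * TA (al j) l k))"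
      unfolding Gm_def
      by (rule sum.cong) (auto simp: Amat_mult[OF K_al K_al] m TA_def of_rat_sum of_rat_mult
          sum_distrib_left simp del: sum.lessThan_Suc)
    also have "\<dots> = (\<Sum>k<n. \<Sum>l<n. \<Sum>j<n. v j * (TA (al m) k l * TA (al j) l k))"
      by (rule sum_swap3)
    also have "\<dots> = (\<Sum>k<n. \<Sum>l<n. TA (al m) k l * (\<Sum>j<n. v j * TA (al l) j k))"
    proof (rule sum.cong[OF refl], rule sum.cong[OF refl])
      fix k l
      have "TA (al l) j k = TA (al j) l k" for j unfolding TA_def using Amat_al_comm[of l j k] by simp
      thus "(\<Sum>j<n. v j * (TA (al m) k l * TA (al j) l k)) = TA (al m) k l * (\<Sum>j<n. v j * TA (al l) j k)"
        by (simp add: sum_distrib_left algebra_simps del: sum.lessThan_Suc)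
    qed
    also have "\<dots> = (\<Sum>k<n. \<Sum>l<n. TA (al m) k l * (lam l * v k))"
    proof (rule sum.cong[OF refl], rule sum.cong[OF refl])
      fix k l assume "k \<in> {..<n}" "l \<in> {..<n}"
      hence "(\<Sum>j<n. v j * TA (al l) j k) = rap n (TA (al l)) v k" by (simp add: rap_def)
      thus "TA (al m) k l * (\<Sum>j<n. v j * TA (al l) j k) = TA (al m) k l * (lam l * v k)"
        using v(3) \<open>l \<in> _\<close> by simp
    qed
    also have "\<dots> = (\<Sum>k<n. v k * (\<Sum>l<n. of_rat (Amat (al m) k l) * s\<chi> (al l)))"
      by (rule sum.cong[OF refl]) (auto simp: s\<chi>_def K_al X5 TA_def sum_distrib_left algebra_simps
          simp del: sum.lessThan_Suc intro!: sum.cong)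
    also have "\<dots> = (\<Sum>k<n. v k * (s\<chi> (al m) * s\<chi> (al k)))"
      by (rule sum.cong[OF refl]) (simp add: Amat_emb[OF sE K_al[OF m]])
    also have "\<dots> = s\<chi> (al m) * (\<Sum>k<n. v k * s\<chi> (al k))"
      by (simp add: sum_distrib_left algebra_simps del: sum.lessThan_Suc)
    also have "\<dots> = 0" using v(1) sE unfolding Iset_def by simp
    finally show "(\<Sum>j<n. v j * of_rat (Gm j m)) = 0" .
  qed
  hence "\<forall>j<n. v j = 0" by (rule G_nondeg)
  moreover have "\<forall>j. n \<le> j \<longrightarrow> v j = 0" using v(1) unfolding Iset_def by simp
  ultimately have "v = (\<lambda>_. 0)" by (metis not_le)
  thus False using v(2) by simp
qed

lemma card_E: "card E = n" and fin_E: "finite E"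
  using card_E_ge E_finite_card by auto

end


context nfb begin

abbreviation "Lam \<equiv> nf_lattice d \<alpha>"

lemma indep_E:
  assumes "\<forall>i<n. (\<Sum>\<sigma>\<in>E. b \<sigma> * \<sigma> (al i)) = 0"
  shows "\<forall>\<sigma>\<in>E. b \<sigma> = 0"
proof (rule dedekind[OF fin_E order_refl])
  fix x assume x: "x \<in> K"
  have "(\<Sum>\<sigma>\<in>E. b \<sigma> * \<sigma> x) = (\<Sum>\<sigma>\<in>E. b \<sigma> * (\<Sum>i<n. of_rat (coord x i) * \<sigma> (al i)))"
    by (rule sum.cong) (auto simp: emb_lin[OF _ x] simp del: sum.lessThan_Suc)
  also have "\<dots> = (\<Sum>i<n. of_rat (coord x i) * (\<Sum>\<sigma>\<in>E. b \<sigma> * \<sigma> (al i)))"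
    by (simp add: sum_distrib_left algebra_simps del: sum.lessThan_Suc) (rule sum.swap)
  also have "\<dots> = 0" using assms by simp
  finally show "(\<Sum>\<sigma>\<in>E. b \<sigma> * \<sigma> x) = 0" .
qed

lemma lattice_alt: "Lam = {x. \<exists>a. x = (\<Sum>i<n. of_rat (of_int (a i)) * al i)}"
proof -
  have "of_int (a 0) + (\<Sum>i=1..d. of_int (a i) * \<alpha> i) = (\<Sum>i<n. of_rat (of_int (a i)) * al i)" for a :: "nat \<Rightarrow> int"
    using rep_eq[of "\<lambda>i. of_int (a i)"] by simp
  thus ?thesis unfolding nf_lattice_def by simp
qed

lemma lattice_coord: "x \<in> Lam \<Longrightarrow> k < n \<Longrightarrow> coord x k \<in> \<int>"
proof -
  assume "x \<in> Lam" "k < n"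
  then obtain a where "x = (\<Sum>i<n. of_rat (of_int (a i)) * al i)" unfolding lattice_alt by blast
  from coord_unique[OF this \<open>k < n\<close>] show ?thesis by simp
qed

lemma al_lattice: "i < n \<Longrightarrow> al i \<in> Lam"
proof -
  assume i: "i < n"
  have "(\<Sum>j<n. of_rat (of_int (if j = i then 1 else 0)) * al j) = (\<Sum>j<n. if j = i then al j else 0)"
    by (rule sum.cong) auto
  hence e: "al i = (\<Sum>j<n. of_rat (of_int (if j = i then 1 else 0)) * al j)" using i by (simp del: sum.lessThan_Suc)
  show ?thesis unfolding lattice_alt by (rule CollectI, rule exI[of _ "\<lambda>j. if j = i then 1 else 0"], rule e)
qed

definition CA :: "real \<Rightarrow> complex mat" where "CA x = mat n n (\<lambda>(i,k). TA x i k)"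

lemma CA_carrier[simp]: "CA x \<in> carrier_mat n n" unfolding CA_def by simp

lemma CA_mult: "x \<in> K \<Longrightarrow> y \<in> K \<Longrightarrow> CA y * CA x = CA (x * y)"
  by (rule eq_matI) (auto simp: CA_def TA_def Amat_mult scalar_prod_def atLeast0LessThan
      of_rat_sum of_rat_mult simp del: sum.lessThan_Suc)

lemma CA_one: "CA 1 = 1\<^sub>m n"
  by (rule eq_matI) (auto simp: CA_def TA_def Amat_one)

lemma det_CA: "x \<in> K \<Longrightarrow> det (CA x) = (\<Prod>\<sigma>\<in>E. \<sigma> x)"
proof -
  assume x: "x \<in> K"
  obtain en where en: "bij_betw en {..<n} E"
    using ex_bij_betw_nat_finite[OF fin_E] card_E by (metis atLeast0LessThan)
  have enE: "en j \<in> E" if "j < n" for j using en that bij_betwE by blast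
  define V where "V = mat n n (\<lambda>(i,j). en j (al i))"
  define D where "D = mat n n (\<lambda>(i,j). if i = j then en j x else 0)"
  have V: "V \<in> carrier_mat n n" and D: "D \<in> carrier_mat n n" unfolding V_def D_def by auto
  have "CA x * V = V * D"
  proof (rule eq_matI)
    fix i j assume ij: "i < dim_row (V * D)" "j < dim_col (V * D)"
    hence i: "i < n" and j: "j < n" using V D by auto
    have "(CA x * V) $$ (i,j) = (\<Sum>k<n. of_rat (Amat x i k) * en j (al k))"
      using i j by (simp add: CA_def V_def TA_def scalar_prod_def atLeast0LessThan)
    also have "\<dots> = en j x * en j (al i)" using Amat_emb[OF enE[OF j] x i] by simp
    also have "\<dots> = (V * D) $$ (i,j)"
    proof -
      have "(V * D) $$ (i,j) = (\<Sum>k<n. en k (al i) * (if k = j then en j x else 0))"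
        using i j by (simp add: V_def D_def scalar_prod_def atLeast0LessThan)
      also have "\<dots> = en j (al i) * en j x" using j by (simp add: if_distrib cong: if_cong)
      finally show ?thesis by simp
    qed
    finally show "(CA x * V) $$ (i,j) = (V * D) $$ (i,j)" .
  qed (use V D in \<open>auto simp: CA_def\<close>)
  hence "det (CA x) * det V = det V * det D"
    using det_mult[OF CA_carrier[of x] V] det_mult[OF V D] by metis
  moreover have "det V \<noteq> 0"
  proof
    assume "det V = 0"
    then obtain a where a: "a \<in> carrier_vec n" "a \<noteq> 0\<^sub>v n" "V *\<^sub>v a = 0\<^sub>v n"
      using det_0_iff_vec_prod_zero_field[OF V] by auto
    define b where "b \<sigma> = a $ (inv_into {..<n} en \<sigma>)" for \<sigma>
    have "\<forall>i<n. (\<Sum>\<sigma>\<in>E. b \<sigma> * \<sigma> (al i)) = 0"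
    proof (intro allI impI)
      fix i assume i: "i < n"
      have "(\<Sum>\<sigma>\<in>E. b \<sigma> * \<sigma> (al i)) = (\<Sum>j<n. b (en j) * en j (al i))"
        using sum.reindex_bij_betw[OF en, of "\<lambda>\<sigma>. b \<sigma> * \<sigma> (al i)"] by simp
      also have "\<dots> = (\<Sum>j<n. a $ j * en j (al i))"
        by (rule sum.cong) (auto simp: b_def bij_betw_inv_into_left[OF en])
      also have "\<dots> = (V *\<^sub>v a) $ i"
        using i a(1) by (simp add: V_def scalar_prod_def atLeast0LessThan mult.commute)
      also have "\<dots> = 0" using a(3) i by simp
      finally show "(\<Sum>\<sigma>\<in>E. b \<sigma> * \<sigma> (al i)) = 0" .
    qed
    hence b0: "\<forall>\<sigma>\<in>E. b \<sigma> = 0" by (rule indep_E)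
    have "a = 0\<^sub>v n"
    proof (rule eq_vecI)
      fix j assume "j < dim_vec (0\<^sub>v n :: complex vec)"
      hence j: "j < n" by simp
      have "b (en j) = a $ j" by (simp add: b_def bij_betw_inv_into_left[OF en] j)
      thus "a $ j = 0\<^sub>v n $ j" using b0 enE[OF j] j by simp
    qed (use a in simp)
    thus False using a(2) by simp
  qed
  ultimately have "det (CA x) = det D" by simp
  also have "det D = (\<Prod>j<n. en j x)"
  proof -
    have "upper_triangular D" unfolding D_def upper_triangular_def by auto
    hence "det D = prod_list (diag_mat D)" using det_upper_triangular D by blast
    also have "diag_mat D = map (\<lambda>j. en j x) [0..<n]"
      unfolding diag_mat_def D_def by auto
    also have "prod_list (map (\<lambda>j. en j x) [0..<n]) = (\<Prod>j\<in>{0..<n}. en j x)"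
      by (subst prod.distinct_set_conv_list[symmetric]) auto
    finally show ?thesis by (simp add: atLeast0LessThan)
  qed
  also have "\<dots> = (\<Prod>\<sigma>\<in>E. \<sigma> x)"
    using prod.reindex_bij_betw[OF en, of "\<lambda>\<sigma>. \<sigma> x"] by simp
  finally show ?thesis .
qed

lemma det_CA_int: "x \<in> coeff_ring K Lam \<Longrightarrow> \<exists>z. det (CA x) = of_int z"
proof -
  assume x: "x \<in> coeff_ring K Lam"
  have xK: "x \<in> K" using x unfolding coeff_ring_def by auto
  have int: "Amat x i k \<in> \<int>" if "i < n" "k < n" for i k
  proof -
    have "x * al i \<in> Lam" using x al_lattice[OF that(1)] unfolding coeff_ring_def by auto
    thus ?thesis unfolding Amat_def using lattice_coord that(2) by blast
  qed
  define Z where "Z = mat n n (\<lambda>(i,k). \<lfloor>Amat x i k\<rfloor>)"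
  have "CA x = map_mat of_int Z"
  proof (rule eq_matI)
    fix i k assume "i < dim_row (map_mat (of_int :: int \<Rightarrow> complex) Z)" "k < dim_col (map_mat (of_int :: int \<Rightarrow> complex) Z)"
    hence i: "i < n" and k: "k < n" unfolding Z_def by auto
    have "of_int \<lfloor>Amat x i k\<rfloor> = Amat x i k" using int[OF i k] by (metis Ints_cases floor_of_int)
    hence "(of_int \<lfloor>Amat x i k\<rfloor> :: complex) = of_rat (Amat x i k)" by (metis of_rat_of_int_eq)
    thus "CA x $$ (i, k) = map_mat of_int Z $$ (i, k)" using i k by (simp add: CA_def Z_def TA_def)
  qed (auto simp: Z_def CA_def)
  hence "det (CA x) = of_int (det Z)" by simp
  thus ?thesis by blast
qed

lemma norm_unit: "u \<in> coeff_units K Lam \<Longrightarrow> cmod (\<Prod>\<sigma>\<in>E. \<sigma> u) = 1"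
proof -
  assume u: "u \<in> coeff_units K Lam"
  then obtain v where v: "v \<in> coeff_ring K Lam" "u * v = 1" and ur: "u \<in> coeff_ring K Lam"
    unfolding coeff_units_def by auto
  have uK: "u \<in> K" and vK: "v \<in> K" using ur v(1) unfolding coeff_ring_def by auto
  have "det (CA v) * det (CA u) = 1"
    using det_mult[OF CA_carrier CA_carrier, of v u] CA_mult[OF uK vK] v(2) CA_one by simp
  moreover obtain zu zv where "det (CA u) = of_int zu" "det (CA v) = of_int zv"
    using det_CA_int[OF ur] det_CA_int[OF v(1)] by blast
  ultimately have "of_int (zv * zu) = (1 :: complex)" by simp
  hence "zv * zu = 1" by (metis of_int_eq_1_iff)
  hence "\<bar>zu\<bar> = 1" using zmult_eq_1_iff by (metis abs_1 abs_neg_one)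
  hence "cmod (det (CA u)) = 1" using \<open>det (CA u) = of_int zu\<close> by (metis norm_of_int of_int_1 of_int_abs)
  thus ?thesis using det_CA[OF uK] by simp
qed

lemma cj_bij: "bij_betw cj E E"
  by (rule bij_betw_byWitness[of _ cj]) (auto intro: cj_emb)

lemma prod_real: "Im (\<Prod>\<sigma>\<in>E. \<sigma> x) = 0"
proof -
  have "cnj (\<Prod>\<sigma>\<in>E. \<sigma> x) = (\<Prod>\<sigma>\<in>E. cj \<sigma> x)" by (simp add: cj_def)
  also have "\<dots> = (\<Prod>\<sigma>\<in>E. \<sigma> x)" using prod.reindex_bij_betw[OF cj_bij, of "\<lambda>\<sigma>. \<sigma> x"] by simp
  finally show ?thesis by (metis Reals_cnj_iff complex_is_Real_iff)
qed

end


lemma cof_rat: "(of_rat c :: complex) = of_real (of_rat c)"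
  by (cases c) (simp add: of_rat_rat)
lemma Im_of_rat[simp]: "Im (of_rat c) = 0" by (simp add: cof_rat)
lemma Re_of_rat[simp]: "Re (of_rat c) = of_rat c" by (simp add: cof_rat)

context nfb begin

abbreviation "idE \<equiv> nf_id_emb K"
abbreviation "R \<equiv> nf_real_embs K"
abbreviation "N \<equiv> nf_nonreal_embs K"
definition "Rp = R - {idE}"
definition ix :: "(real \<Rightarrow> complex) \<Rightarrow> nat" where "ix \<sigma> = (LEAST i. Im (\<sigma> (al i)) \<noteq> 0)"
definition "H = {\<sigma>\<in>N. Im (\<sigma> (al (ix \<sigma>))) > 0}"

lemma R_sub: "R \<subseteq> E" unfolding nf_real_embs_def by auto
lemma N_eq: "N = E - R" unfolding nf_nonreal_embs_def by simp
lemma idR: "idE \<in> R" unfolding nf_real_embs_def using id_emb by (auto simp: nf_id_emb_def)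

lemma real_iff: "\<sigma> \<in> E \<Longrightarrow> \<sigma> \<in> R \<longleftrightarrow> (\<forall>i<n. Im (\<sigma> (al i)) = 0)"
proof -
  assume s: "\<sigma> \<in> E"
  show ?thesis
  proof
    assume "\<sigma> \<in> R" thus "\<forall>i<n. Im (\<sigma> (al i)) = 0" unfolding nf_real_embs_def using K_al by auto
  next
    assume h: "\<forall>i<n. Im (\<sigma> (al i)) = 0"
    have "Im (\<sigma> x) = 0" if x: "x \<in> K" for x
      using h by (simp add: emb_lin[OF s x] Im_sum del: sum.lessThan_Suc)
    thus "\<sigma> \<in> R" using s unfolding nf_real_embs_def by auto
  qed
qed

lemma cj_R: "\<sigma> \<in> R \<Longrightarrow> cj \<sigma> = \<sigma>"
proof (rule ext)
  fix x assume s: "\<sigma> \<in> R"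
  hence sE: "\<sigma> \<in> E" using R_sub by auto
  show "cj \<sigma> x = \<sigma> x"
  proof (cases "x \<in> K")
    case True
    hence "Im (\<sigma> x) = 0" using s unfolding nf_real_embs_def by auto
    thus ?thesis unfolding cj_def by (simp add: complex_eq_iff)
  next
    case False thus ?thesis using emb_out[OF sE] by (simp add: cj_def)
  qed
qed

lemma N_ex: "\<sigma> \<in> N \<Longrightarrow> Im (\<sigma> (al (ix \<sigma>))) \<noteq> 0"
proof -
  assume "\<sigma> \<in> N"
  hence "\<sigma> \<in> E" "\<sigma> \<notin> R" unfolding N_eq by auto
  then obtain i where "Im (\<sigma> (al i)) \<noteq> 0" using real_iff by auto
  thus ?thesis unfolding ix_def by (rule LeastI)
qed

lemma cj_Im: "Im (cj \<sigma> x) = - Im (\<sigma> x)" by (simp add: cj_def)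

lemma ix_cj: "ix (cj \<sigma>) = ix \<sigma>"
  unfolding ix_def cj_Im by simp

lemma cj_N: "\<sigma> \<in> N \<Longrightarrow> cj \<sigma> \<in> N"
proof -
  assume s: "\<sigma> \<in> N"
  hence sE: "\<sigma> \<in> E" unfolding N_eq by auto
  have "Im (cj \<sigma> (al (ix (cj \<sigma>)))) \<noteq> 0" using N_ex[OF s] by (simp add: ix_cj cj_Im)
  hence "cj \<sigma> \<notin> R" using real_iff[OF cj_emb[OF sE]] N_ex[OF s]
    by (metis cj_R cj_cj s N_eq DiffD2)
  thus ?thesis using cj_emb[OF sE] unfolding N_eq by auto
qed

lemma H_cj: "\<sigma> \<in> N \<Longrightarrow> cj \<sigma> \<in> H \<longleftrightarrow> \<sigma> \<notin> H"
  using N_ex[of \<sigma>] cj_N[of \<sigma>] unfolding H_def by (auto simp: ix_cj cj_Im)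

lemma H_sub: "H \<subseteq> N" unfolding H_def by auto

lemma N_split: "N = H \<union> cj ` H" and H_disj: "H \<inter> cj ` H = {}"
proof -
  show "N = H \<union> cj ` H"
  proof
    show "N \<subseteq> H \<union> cj ` H"
    proof
      fix \<sigma> assume s: "\<sigma> \<in> N"
      show "\<sigma> \<in> H \<union> cj ` H"
      proof (cases "\<sigma> \<in> H")
        case False
        hence "cj \<sigma> \<in> H" using H_cj[OF s] by simp
        hence "cj (cj \<sigma>) \<in> cj ` H" by blast
        thus ?thesis by simp
      qed simp
    qed
    show "H \<union> cj ` H \<subseteq> N" using H_sub cj_N by auto
  qed
  show "H \<inter> cj ` H = {}" using H_cj H_sub by auto
qed

lemma fin_N: "finite N" unfolding N_eq using fin_E by simp
lemma fin_H: "finite H" using fin_N H_sub finite_subset by blast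
lemma fin_R: "finite R" using fin_E R_sub finite_subset by blast
lemma fin_Rp: "finite Rp" unfolding Rp_def using fin_R by simp

lemma inj_cj: "inj_on cj A" by (rule inj_on_inverseI[of _ cj]) simp

lemma card_N: "card N = 2 * card H"
proof -
  have "card N = card H + card (cj ` H)"
    unfolding N_split using card_Un_disjoint[OF fin_H finite_imageI[OF fin_H] H_disj] by simp
  also have "card (cj ` H) = card H" by (rule card_image[OF inj_cj])
  finally show ?thesis by simp
qed

lemma card_RN: "card R + card N = n"
  unfolding N_eq using card_Diff_subset[OF fin_R R_sub] card_mono[OF fin_E R_sub] card_E by simp

lemma card_Rp: "card Rp = card R - 1"
  unfolding Rp_def using idR fin_R by simp

lemma rm_d: "(card R - 1) + 2 * (card N div 2) = d"
  using card_RN card_N card_mono[OF fin_R, of "{idE}"] idR by simp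

lemma E_split: "E = insert idE (Rp \<union> (H \<union> cj ` H))"
  unfolding Rp_def N_split[symmetric] using N_eq R_sub idR by auto

lemma sum_E: "(\<Sum>\<sigma>\<in>E. f \<sigma>) = f idE + (\<Sum>\<sigma>\<in>Rp. f \<sigma>) + (\<Sum>\<sigma>\<in>H. f \<sigma> + f (cj \<sigma>))"
proof -
  have d1: "idE \<notin> Rp \<union> (H \<union> cj ` H)" unfolding Rp_def N_split[symmetric] using idR N_eq by auto
  have d2: "Rp \<inter> (H \<union> cj ` H) = {}" unfolding Rp_def N_split[symmetric] using N_eq by auto
  have "(\<Sum>\<sigma>\<in>E. f \<sigma>) = f idE + ((\<Sum>\<sigma>\<in>Rp. f \<sigma>) + ((\<Sum>\<sigma>\<in>H. f \<sigma>) + (\<Sum>\<sigma>\<in>cj ` H. f \<sigma>)))"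
    unfolding E_split using d1 d2 fin_Rp fin_H H_disj
    by (simp add: sum.union_disjoint)
  also have "(\<Sum>\<sigma>\<in>cj ` H. f \<sigma>) = (\<Sum>\<sigma>\<in>H. f (cj \<sigma>))"
    by (rule sum.reindex[OF inj_cj, unfolded comp_def])
  finally show ?thesis by (simp add: sum.distrib add.assoc)
qed

lemma prod_E1: "(\<Prod>\<sigma>\<in>E - {idE}. f \<sigma>) = (\<Prod>\<sigma>\<in>Rp. f \<sigma>) * (\<Prod>\<sigma>\<in>H. f \<sigma> * f (cj \<sigma>))"
proof -
  have e: "E - {idE} = Rp \<union> (H \<union> cj ` H)" unfolding Rp_def N_split[symmetric] using N_eq R_sub idR by auto
  have d2: "Rp \<inter> (H \<union> cj ` H) = {}" unfolding Rp_def N_split[symmetric] using N_eq by auto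
  have "(\<Prod>\<sigma>\<in>E - {idE}. f \<sigma>) = (\<Prod>\<sigma>\<in>Rp. f \<sigma>) * ((\<Prod>\<sigma>\<in>H. f \<sigma>) * (\<Prod>\<sigma>\<in>cj ` H. f \<sigma>))"
    unfolding e using d2 fin_Rp fin_H H_disj by (simp add: prod.union_disjoint)
  also have "(\<Prod>\<sigma>\<in>cj ` H. f \<sigma>) = (\<Prod>\<sigma>\<in>H. f (cj \<sigma>))"
    by (rule prod.reindex[OF inj_cj, unfolded comp_def])
  finally show ?thesis by (simp add: prod.distrib)
qed

lemma idE_K: "x \<in> K \<Longrightarrow> idE x = of_real x" unfolding nf_id_emb_def by simp

end


lemma sum_pairs: fixes F :: "nat \<Rightarrow> 'a::comm_monoid_add" and r m :: nat shows "(\<Sum>j<r + 2*m. F j) = (\<Sum>j<r. F j) + (\<Sum>i<m. F (r + 2*i) + F (r + 2*i + 1))"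
  by (induction m) (auto simp: add.assoc)

lemma prod_pairs: fixes F :: "nat \<Rightarrow> 'a::comm_monoid_mult" and r m :: nat shows "(\<Prod>j<r + 2*m. F j) = (\<Prod>j<r. F j) * (\<Prod>i<m. F (r + 2*i) * F (r + 2*i + 1))"
  by (induction m) (auto simp: mult.assoc)

context nfb begin

abbreviation "rr \<equiv> card R - 1"
abbreviation "mm \<equiv> card N div 2"

lemma mm_H: "mm = card H" using card_N by simp
lemma rr_Rp: "rr = card Rp" using card_Rp by simp
lemma d_eq: "d = rr + 2 * mm" using rm_d by simp
lemma dd: "{..<d} = {..<rr + 2 * mm}" using d_eq by (rule arg_cong)

definition rho where "rho = (SOME g. bij_betw g {..<rr} Rp)"
definition tau where "tau = (SOME g. bij_betw g {..<mm} H)"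

lemma rho_bij: "bij_betw rho {..<rr} Rp"
proof -
  have "\<exists>g. bij_betw g {..<rr} Rp"
    using ex_bij_betw_nat_finite[OF fin_Rp] rr_Rp by (metis atLeast0LessThan)
  thus ?thesis unfolding rho_def by (rule someI_ex)
qed

lemma tau_bij: "bij_betw tau {..<mm} H"
proof -
  have "\<exists>g. bij_betw g {..<mm} H"
    using ex_bij_betw_nat_finite[OF fin_H] mm_H by (metis atLeast0LessThan)
  thus ?thesis unfolding tau_def by (rule someI_ex)
qed

lemma rho_in: "j < rr \<Longrightarrow> rho j \<in> Rp" using rho_bij bij_betwE by blast
lemma tau_in: "i < mm \<Longrightarrow> tau i \<in> H" using tau_bij bij_betwE by blast

lemma Rp_E: "Rp \<subseteq> E - {idE}" unfolding Rp_def using R_sub by auto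
lemma H_E: "H \<subseteq> E - {idE}" using H_sub idR unfolding N_eq by auto
lemma Rp_R: "Rp \<subseteq> R" unfolding Rp_def by auto
lemma H_notR: "\<sigma> \<in> H \<Longrightarrow> \<sigma> \<notin> R" using H_sub unfolding N_eq by auto
lemma cjH_notR: "\<sigma> \<in> H \<Longrightarrow> cj \<sigma> \<notin> R" using H_sub cj_N unfolding N_eq by blast

definition xc :: "((real \<Rightarrow> complex) \<Rightarrow> complex) \<Rightarrow> nat \<Rightarrow> real" where
  "xc z j = (if j < rr then Re (z (rho j)) else if even (j - rr) then Re (z (tau ((j - rr) div 2)))
     else Im (z (tau ((j - rr) div 2))))"

definition wv :: "(real \<Rightarrow> complex) \<Rightarrow> nat \<Rightarrow> complex" where
  "wv \<sigma> l = complex_of_real (al (Suc l)) - \<sigma> (al (Suc l))"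

definition Mf :: "nat \<Rightarrow> nat \<Rightarrow> real" where
  "Mf j l = (if j < rr then Re (wv (rho j) l) else if even (j - rr) then 2 * Re (wv (tau ((j - rr) div 2)) l)
     else - 2 * Im (wv (tau ((j - rr) div 2)) l))"

lemma xc_pair: "xc z (rr + 2 * i) = Re (z (tau i))" "xc z (rr + 2 * i + 1) = Im (z (tau i))"
  unfolding xc_def by auto
lemma Mf_pair: "Mf (rr + 2 * i) l = 2 * Re (wv (tau i) l)" "Mf (rr + 2 * i + 1) l = - 2 * Im (wv (tau i) l)"
  unfolding Mf_def by auto

lemma wv_cj: "wv (cj \<sigma>) l = cnj (wv \<sigma> l)" unfolding wv_def cj_def by simp

lemma wv_R: "\<sigma> \<in> R \<Longrightarrow> l < d \<Longrightarrow> Im (wv \<sigma> l) = 0"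
  unfolding wv_def nf_real_embs_def using K_al[of "Suc l"] by auto

lemma wv_id: "l < d \<Longrightarrow> wv idE l = 0"
  unfolding wv_def using K_al[of "Suc l"] idE_K by simp

lemma key_id:
  assumes z: "\<And>\<sigma>. \<sigma> \<in> E \<Longrightarrow> z (cj \<sigma>) = cnj (z \<sigma>)" and l: "l < d"
  shows "Re (\<Sum>\<sigma>\<in>E. z \<sigma> * wv \<sigma> l) = (\<Sum>j<d. Mf j l * xc z j)"
proof -
  have "Re (\<Sum>\<sigma>\<in>E. z \<sigma> * wv \<sigma> l)
      = Re (z idE * wv idE l) + (\<Sum>\<sigma>\<in>Rp. Re (z \<sigma> * wv \<sigma> l))
        + (\<Sum>\<sigma>\<in>H. Re (z \<sigma> * wv \<sigma> l + z (cj \<sigma>) * wv (cj \<sigma>) l))"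
  proof -
    have s: "(\<Sum>\<sigma>\<in>E. z \<sigma> * wv \<sigma> l) = z idE * wv idE l + (\<Sum>\<sigma>\<in>Rp. z \<sigma> * wv \<sigma> l)
        + (\<Sum>\<sigma>\<in>H. z \<sigma> * wv \<sigma> l + z (cj \<sigma>) * wv (cj \<sigma>) l)" by (rule sum_E)
    show ?thesis unfolding s by (simp only: plus_complex.sel Re_sum)
  qed
  also have "Re (z idE * wv idE l) = 0" using wv_id[OF l] by simp
  also have "(\<Sum>\<sigma>\<in>Rp. Re (z \<sigma> * wv \<sigma> l)) = (\<Sum>\<sigma>\<in>Rp. Re (z \<sigma>) * Re (wv \<sigma> l))"
    by (rule sum.cong) (use wv_R[OF _ l] Rp_R in auto)
  also have "\<dots> = (\<Sum>j<rr. Re (z (rho j)) * Re (wv (rho j) l))"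
    using sum.reindex_bij_betw[OF rho_bij, of "\<lambda>\<sigma>. Re (z \<sigma>) * Re (wv \<sigma> l)"] by simp
  also have "(\<Sum>\<sigma>\<in>H. Re (z \<sigma> * wv \<sigma> l + z (cj \<sigma>) * wv (cj \<sigma>) l))
      = (\<Sum>\<sigma>\<in>H. 2 * Re (z \<sigma>) * Re (wv \<sigma> l) - 2 * Im (z \<sigma>) * Im (wv \<sigma> l))"
    by (rule sum.cong) (use z H_E in \<open>auto simp: wv_cj\<close>)
  also have "\<dots> = (\<Sum>i<mm. 2 * Re (z (tau i)) * Re (wv (tau i) l) - 2 * Im (z (tau i)) * Im (wv (tau i) l))"
    using sum.reindex_bij_betw[OF tau_bij, of "\<lambda>\<sigma>. 2 * Re (z \<sigma>) * Re (wv \<sigma> l) - 2 * Im (z \<sigma>) * Im (wv \<sigma> l)"]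
    by simp
  also have "0 + (\<Sum>j<rr. Re (z (rho j)) * Re (wv (rho j) l)) + \<dots> = (\<Sum>j<d. Mf j l * xc z j)"
  proof -
    have a: "(\<Sum>j<rr. Mf j l * xc z j) = (\<Sum>j<rr. Re (z (rho j)) * Re (wv (rho j) l))"
      by (rule sum.cong) (auto simp: Mf_def xc_def)
    have b: "(\<Sum>i<mm. Mf (rr + 2*i) l * xc z (rr + 2*i) + Mf (rr + 2*i + 1) l * xc z (rr + 2*i + 1))
       = (\<Sum>i<mm. 2 * Re (z (tau i)) * Re (wv (tau i) l) - 2 * Im (z (tau i)) * Im (wv (tau i) l))"
      by (rule sum.cong[OF refl], simp only: Mf_pair xc_pair, simp)
    show ?thesis unfolding dd sum_pairs a b by simp
  qed
  finally show ?thesis .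
qed

end


context nfb begin

lemma sum_real_conj:
  assumes "\<And>\<sigma>. \<sigma> \<in> E \<Longrightarrow> f (cj \<sigma>) = cnj (f \<sigma>)"
  shows "Im (\<Sum>\<sigma>\<in>E. f \<sigma>) = 0"
proof -
  have "cnj (\<Sum>\<sigma>\<in>E. f \<sigma>) = (\<Sum>\<sigma>\<in>E. f (cj \<sigma>))" using assms by simp
  also have "\<dots> = (\<Sum>\<sigma>\<in>E. f \<sigma>)" using sum.reindex_bij_betw[OF cj_bij, of f] by simp
  finally show ?thesis by (metis Reals_cnj_iff complex_is_Real_iff)
qed

lemma rho_inv: "j < rr \<Longrightarrow> inv_into {..<rr} rho (rho j) = j"
  using bij_betw_inv_into_left[OF rho_bij] by simp
lemma tau_inv: "i < mm \<Longrightarrow> inv_into {..<mm} tau (tau i) = i"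
  using bij_betw_inv_into_left[OF tau_bij] by simp

definition Mm :: "real mat" where "Mm = mat d d (\<lambda>(j,l). Mf j l)"

lemma Mm_carrier: "Mm \<in> carrier_mat d d" unfolding Mm_def by simp

lemma M_kernel:
  assumes lv: "lv \<in> carrier_vec d" and ker: "\<forall>l<d. (\<Sum>j<d. Mf j l * lv $ j) = 0"
  shows "lv = 0\<^sub>v d"
proof -
  define ir where "ir \<sigma> = inv_into {..<rr} rho \<sigma>" for \<sigma>
  define it where "it \<sigma> = inv_into {..<mm} tau \<sigma>" for \<sigma>
  define zl where "zl \<sigma> = (if \<sigma> \<in> Rp then complex_of_real (lv $ ir \<sigma>)
     else if \<sigma> \<in> H then Complex (lv $ (rr + 2 * it \<sigma>)) (lv $ (rr + 2 * it \<sigma> + 1))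
     else if cj \<sigma> \<in> H then Complex (lv $ (rr + 2 * it (cj \<sigma>))) (- lv $ (rr + 2 * it (cj \<sigma>) + 1))
     else 0)" for \<sigma>
  have zsym: "zl (cj \<sigma>) = cnj (zl \<sigma>)" if s: "\<sigma> \<in> E" for \<sigma>
  proof -
    consider "\<sigma> \<in> Rp" | "\<sigma> \<notin> Rp" "\<sigma> \<in> H" | "\<sigma> \<notin> Rp" "\<sigma> \<notin> H" "cj \<sigma> \<in> H" | "\<sigma> \<notin> Rp" "\<sigma> \<notin> H" "cj \<sigma> \<notin> H"
      by blast
    thus ?thesis
    proof cases
      case 1 thus ?thesis using cj_R Rp_R by (auto simp: zl_def)
    next
      case 2
      have "cj \<sigma> \<notin> Rp" using cjH_notR[OF 2(2)] Rp_R by auto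
      moreover have "cj \<sigma> \<notin> H" using H_cj[of \<sigma>] 2(2) H_sub by auto
      ultimately show ?thesis using 2 by (simp add: zl_def complex_eq_iff)
    next
      case 3
      have "\<sigma> \<notin> R" using cjH_notR[OF 3(3)] by simp
      moreover have "cj \<sigma> \<notin> Rp" using H_notR[OF 3(3)] Rp_R by auto
      ultimately show ?thesis using 3 by (simp add: zl_def complex_eq_iff)
    next
      case 4
      have "cj \<sigma> \<notin> Rp"
      proof
        assume "cj \<sigma> \<in> Rp"
        hence "\<sigma> = cj \<sigma>" using cj_R[of "cj \<sigma>"] Rp_R by auto
        thus False using 4 \<open>cj \<sigma> \<in> Rp\<close> by simp
      qed
      thus ?thesis using 4 by (simp add: zl_def)
    qed
  qed
  have xz: "xc zl j = lv $ j" if j: "j < d" for j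
  proof (cases "j < rr")
    case True
    thus ?thesis using rho_in[OF True] rho_inv[OF True] by (simp add: xc_def zl_def ir_def)
  next
    case False
    define i where "i = (j - rr) div 2"
    have i: "i < mm" using j False d_eq unfolding i_def by linarith
    have ti: "tau i \<in> H" "tau i \<notin> Rp" using tau_in[OF i] H_notR Rp_R by auto
    show ?thesis
    proof (cases "even (j - rr)")
      case True
      hence "j = rr + 2 * i" using False even_two_times_div_two[OF True] unfolding i_def by simp
      thus ?thesis using ti i by (simp add: xc_def zl_def it_def tau_inv)
    next
      case odd: False
      hence "j = rr + 2 * i + 1" using False odd_two_times_div_two_succ[OF odd] unfolding i_def by simp
      thus ?thesis using ti i by (simp add: xc_def zl_def it_def tau_inv)
    qed
  qed
  have S0: "(\<Sum>\<sigma>\<in>E. zl \<sigma> * wv \<sigma> l) = 0" if l: "l < d" for l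
  proof -
    have "Re (\<Sum>\<sigma>\<in>E. zl \<sigma> * wv \<sigma> l) = (\<Sum>j<d. Mf j l * xc zl j)"
      by (rule key_id[where z=zl, OF zsym l])
    also have "\<dots> = 0" using ker l xz by simp
    finally have "Re (\<Sum>\<sigma>\<in>E. zl \<sigma> * wv \<sigma> l) = 0" .
    moreover have "Im (\<Sum>\<sigma>\<in>E. zl \<sigma> * wv \<sigma> l) = 0"
      by (rule sum_real_conj) (simp add: zsym wv_cj)
    ultimately show ?thesis by (simp add: complex_eq_iff)
  qed
  define b where "b \<sigma> = (if \<sigma> = idE then (\<Sum>\<tau>\<in>E. zl \<tau>) else 0) - zl \<sigma>" for \<sigma>
  have "\<forall>i<n. (\<Sum>\<sigma>\<in>E. b \<sigma> * \<sigma> (al i)) = 0"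
  proof (intro allI impI)
    fix i assume i: "i < n"
    have "(\<Sum>\<sigma>\<in>E. b \<sigma> * \<sigma> (al i)) = (\<Sum>\<tau>\<in>E. zl \<tau>) * idE (al i) - (\<Sum>\<sigma>\<in>E. zl \<sigma> * \<sigma> (al i))"
    proof -
      have "(\<Sum>\<sigma>\<in>E. b \<sigma> * \<sigma> (al i)) = (\<Sum>\<sigma>\<in>E. (if \<sigma> = idE then (\<Sum>\<tau>\<in>E. zl \<tau>) * \<sigma> (al i) else 0) - zl \<sigma> * \<sigma> (al i))"
        by (rule sum.cong) (auto simp: b_def algebra_simps)
      also have "\<dots> = (\<Sum>\<sigma>\<in>E. (if \<sigma> = idE then (\<Sum>\<tau>\<in>E. zl \<tau>) * \<sigma> (al i) else 0)) - (\<Sum>\<sigma>\<in>E. zl \<sigma> * \<sigma> (al i))"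
        by (rule sum_subtractf)
      also have "(\<Sum>\<sigma>\<in>E. (if \<sigma> = idE then (\<Sum>\<tau>\<in>E. zl \<tau>) * \<sigma> (al i) else 0)) = (\<Sum>\<tau>\<in>E. zl \<tau>) * idE (al i)"
        using id_emb fin_E by (simp add: sum.delta)
      finally show ?thesis .
    qed
    also have "\<dots> = (\<Sum>\<sigma>\<in>E. zl \<sigma> * (of_real (al i) - \<sigma> (al i)))"
      using idE_K[OF K_al[OF i]] by (simp add: sum_distrib_right right_diff_distrib sum_subtractf)
    also have "\<dots> = 0"
    proof (cases i)
      case 0
      have "(\<Sum>\<sigma>\<in>E. zl \<sigma> * (of_real (al i) - \<sigma> (al i))) = (\<Sum>\<sigma>\<in>E. 0)"
        by (rule sum.cong) (auto simp: 0 al_def emb_one)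
      thus ?thesis by simp
    next
      case (Suc l)
      hence "l < d" using i by simp
      thus ?thesis using S0[of l] unfolding wv_def Suc by simp
    qed
    finally show "(\<Sum>\<sigma>\<in>E. b \<sigma> * \<sigma> (al i)) = 0" .
  qed
  hence b0: "\<forall>\<sigma>\<in>E. b \<sigma> = 0" by (rule indep_E)
  have z0: "zl \<sigma> = 0" if "\<sigma> \<in> E - {idE}" for \<sigma> using b0 that unfolding b_def by auto
  show ?thesis
  proof (rule eq_vecI)
    fix j assume "j < dim_vec (0\<^sub>v d :: real vec)"
    hence j: "j < d" by simp
    have "xc zl j = 0"
    proof (cases "j < rr")
      case True
      have "zl (rho j) = 0" using z0 rho_in[OF True] Rp_E by blast
      thus ?thesis using True unfolding xc_def by simp
    next
      case False
      have "(j - rr) div 2 < mm" using j False d_eq by linarith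
      hence "zl (tau ((j - rr) div 2)) = 0" using z0 tau_in H_E by blast
      thus ?thesis using False unfolding xc_def by simp
    qed
    thus "lv $ j = 0\<^sub>v d $ j" using xz[OF j] j by simp
  qed (use lv in simp)
qed

lemma M_invertible: "invertible_mat Mm"
proof -
  have "det Mm \<noteq> 0"
  proof
    assume "det Mm = 0"
    hence "det (transpose_mat Mm) = 0" using det_transpose[OF Mm_carrier] by simp
    then obtain lv where lv: "lv \<in> carrier_vec d" "lv \<noteq> 0\<^sub>v d" "transpose_mat Mm *\<^sub>v lv = 0\<^sub>v d"
      using det_0_iff_vec_prod_zero_field[of "transpose_mat Mm" d] Mm_carrier by auto
    have "\<forall>l<d. (\<Sum>j<d. Mf j l * lv $ j) = 0"
    proof (intro allI impI)
      fix l assume l: "l < d"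
      have "(transpose_mat Mm *\<^sub>v lv) $ l = 0" using lv(3) l by simp
      thus "(\<Sum>j<d. Mf j l * lv $ j) = 0"
        using l lv(1) by (simp add: Mm_def scalar_prod_def atLeast0LessThan)
    qed
    from M_kernel[OF lv(1) this] lv(2) show False by simp
  qed
  then have "Mm \<in> Units (ring_mat TYPE(real) d undefined)"
    by (rule det_non_zero_imp_unit[OF Mm_carrier])
  then obtain B where B: "B \<in> carrier_mat d d" "B * Mm = 1\<^sub>m d" "Mm * B = 1\<^sub>m d"
    unfolding Units_def ring_mat_def by auto
  show ?thesis unfolding invertible_mat_def inverts_mat_def square_mat.simps
    using B Mm_carrier by auto
qed

end


context nfb begin

definition Pf :: "real vec \<Rightarrow> real" where
  "Pf x = \<bar>\<Prod>j<rr. x $ j\<bar> * (\<Prod>i<mm. (x $ (rr + 2*i))\<^sup>2 + (x $ (rr + 2*i + 1))\<^sup>2)"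

lemma on_surface_Pf: "on_surface rr mm x \<longleftrightarrow> Pf x = 1"
  unfolding on_surface_def Pf_def by simp

lemma Pf_scale:
  assumes x: "x \<in> carrier_vec d" and c: "c \<ge> 0"
  shows "Pf (c \<cdot>\<^sub>v x) = c ^ d * Pf x"
proof -
  have i1: "j < d" if "j < rr" for j using that d_eq by simp
  have i2: "rr + 2*i < d" "rr + 2*i + 1 < d" if "i < mm" for i using that d_eq by simp_all
  have "(\<Prod>j<rr. (c \<cdot>\<^sub>v x) $ j) = (\<Prod>j<rr. c * x $ j)"
    by (rule prod.cong) (use x i1 in auto)
  also have "\<dots> = c ^ rr * (\<Prod>j<rr. x $ j)" by (simp add: prod.distrib)
  finally have a: "\<bar>\<Prod>j<rr. (c \<cdot>\<^sub>v x) $ j\<bar> = c ^ rr * \<bar>\<Prod>j<rr. x $ j\<bar>"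
    using c by (simp add: abs_mult)
  have "(\<Prod>i<mm. ((c \<cdot>\<^sub>v x) $ (rr + 2*i))\<^sup>2 + ((c \<cdot>\<^sub>v x) $ (rr + 2*i + 1))\<^sup>2)
      = (\<Prod>i<mm. c\<^sup>2 * ((x $ (rr + 2*i))\<^sup>2 + (x $ (rr + 2*i + 1))\<^sup>2))"
    by (rule prod.cong) (use x i2 in \<open>auto simp: power_mult_distrib algebra_simps\<close>)
  also have "\<dots> = (c\<^sup>2) ^ mm * (\<Prod>i<mm. (x $ (rr + 2*i))\<^sup>2 + (x $ (rr + 2*i + 1))\<^sup>2)"
    by (simp add: prod.distrib)
  finally have b: "(\<Prod>i<mm. ((c \<cdot>\<^sub>v x) $ (rr + 2*i))\<^sup>2 + ((c \<cdot>\<^sub>v x) $ (rr + 2*i + 1))\<^sup>2)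
      = c ^ (2 * mm) * (\<Prod>i<mm. (x $ (rr + 2*i))\<^sup>2 + (x $ (rr + 2*i + 1))\<^sup>2)"
    by (simp add: power_mult)
  have "c ^ d = c ^ rr * c ^ (2 * mm)" using d_eq by (metis power_add)
  thus ?thesis unfolding Pf_def a b by (simp add: algebra_simps)
qed

lemma Pf_xc:
  assumes y: "y \<in> K"
  shows "Pf (vec d (xc (\<lambda>\<sigma>. \<sigma> y))) = (\<Prod>\<sigma>\<in>E - {idE}. cmod (\<sigma> y))"
proof -
  have i1: "j < d" if "j < rr" for j using that d_eq by simp
  have i2: "rr + 2*i < d" "rr + 2*i + 1 < d" if "i < mm" for i using that d_eq by simp_all
  have "(\<Prod>j<rr. vec d (xc (\<lambda>\<sigma>. \<sigma> y)) $ j) = (\<Prod>j<rr. Re (rho j y))"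
    by (rule prod.cong) (use i1 in \<open>auto simp: xc_def\<close>)
  hence "\<bar>\<Prod>j<rr. vec d (xc (\<lambda>\<sigma>. \<sigma> y)) $ j\<bar> = (\<Prod>j<rr. \<bar>Re (rho j y)\<bar>)"
    by (simp add: abs_prod)
  also have "\<dots> = (\<Prod>j<rr. cmod (rho j y))"
  proof (rule prod.cong[OF refl])
    fix j assume "j \<in> {..<rr}"
    hence "rho j \<in> R" using rho_in Rp_R by auto
    hence "Im (rho j y) = 0" using y unfolding nf_real_embs_def by auto
    thus "\<bar>Re (rho j y)\<bar> = cmod (rho j y)" by (simp add: cmod_eq_Re)
  qed
  also have "\<dots> = (\<Prod>\<sigma>\<in>Rp. cmod (\<sigma> y))"
    using prod.reindex_bij_betw[OF rho_bij, of "\<lambda>\<sigma>. cmod (\<sigma> y)"] by simp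
  finally have a: "\<bar>\<Prod>j<rr. vec d (xc (\<lambda>\<sigma>. \<sigma> y)) $ j\<bar> = (\<Prod>\<sigma>\<in>Rp. cmod (\<sigma> y))" .
  have "(\<Prod>i<mm. (vec d (xc (\<lambda>\<sigma>. \<sigma> y)) $ (rr + 2*i))\<^sup>2 + (vec d (xc (\<lambda>\<sigma>. \<sigma> y)) $ (rr + 2*i + 1))\<^sup>2)
      = (\<Prod>i<mm. cmod (tau i y) * cmod (cj (tau i) y))"
  proof (rule prod.cong[OF refl])
    fix i assume "i \<in> {..<mm}"
    hence i: "i < mm" by simp
    have "(vec d (xc (\<lambda>\<sigma>. \<sigma> y)) $ (rr + 2*i))\<^sup>2 + (vec d (xc (\<lambda>\<sigma>. \<sigma> y)) $ (rr + 2*i + 1))\<^sup>2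
        = (Re (tau i y))\<^sup>2 + (Im (tau i y))\<^sup>2"
      using i2[OF i] xc_pair[of "\<lambda>\<sigma>. \<sigma> y" i] by simp
    also have "\<dots> = cmod (tau i y) * cmod (cj (tau i) y)"
      by (simp add: cj_def cmod_power2 power2_eq_square[symmetric])
    finally show "(vec d (xc (\<lambda>\<sigma>. \<sigma> y)) $ (rr + 2*i))\<^sup>2 + (vec d (xc (\<lambda>\<sigma>. \<sigma> y)) $ (rr + 2*i + 1))\<^sup>2
        = cmod (tau i y) * cmod (cj (tau i) y)" .
  qed
  also have "\<dots> = (\<Prod>\<sigma>\<in>H. cmod (\<sigma> y) * cmod (cj \<sigma> y))"
    using prod.reindex_bij_betw[OF tau_bij, of "\<lambda>\<sigma>. cmod (\<sigma> y) * cmod (cj \<sigma> y)"] by simp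
  finally have b: "(\<Prod>i<mm. (vec d (xc (\<lambda>\<sigma>. \<sigma> y)) $ (rr + 2*i))\<^sup>2 + (vec d (xc (\<lambda>\<sigma>. \<sigma> y)) $ (rr + 2*i + 1))\<^sup>2)
      = (\<Prod>\<sigma>\<in>H. cmod (\<sigma> y) * cmod (cj \<sigma> y))" .
  show ?thesis unfolding Pf_def a b prod_E1[of "\<lambda>\<sigma>. cmod (\<sigma> y)"] ..
qed

lemma trace_id:
  assumes y: "y \<in> K" and i: "i < d"
  shows "nf_trace K y * \<alpha> (i + 1) - nf_trace K (y * \<alpha> (i + 1)) = Re (\<Sum>\<sigma>\<in>E. \<sigma> y * wv \<sigma> i)"
proof -
  have a: "\<alpha> (i + 1) = al (Suc i)" by (simp add: al_def)
  have aK: "al (Suc i) \<in> K" using K_al i by simp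
  have "(\<Sum>\<sigma>\<in>E. \<sigma> y * wv \<sigma> i) = (\<Sum>\<sigma>\<in>E. \<sigma> y) * of_real (al (Suc i)) - (\<Sum>\<sigma>\<in>E. \<sigma> (y * al (Suc i)))"
    unfolding wv_def
    by (simp add: sum_distrib_right right_diff_distrib sum_subtractf emb_mult[OF _ y aK])
  thus ?thesis unfolding nf_trace_def a by simp
qed

end


context nfb begin

abbreviation "kap \<equiv> kappa K Lam"

lemma dom_bound:
  assumes "dominant_unit d K Lam u" "\<sigma> \<in> E - {idE}"
  shows "cmod (\<sigma> u) \<le> kap"
proof -
  obtain t where t: "t > 1" "t \<le> \<bar>u\<bar>" "\<bar>u\<bar> \<le> kap * t"
    "cmod (\<sigma> u) \<le> kap * t powr (- 1 / real d)"
    using assms unfolding dominant_unit_def by blast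
  have k1: "kap \<ge> 1"
  proof (rule ccontr)
    assume "\<not> kap \<ge> 1"
    hence "kap * t < t" using t(1) by (simp add: mult_less_cancel_right1)
    thus False using t(2,3) by simp
  qed
  have "t powr (1 / real d) \<ge> 1" using t(1) by (intro ge_one_powr_ge_zero) auto
  hence "t powr (- 1 / real d) \<le> 1"
    by (simp add: powr_minus_divide powr_minus divide_simps)
  hence "kap * t powr (- 1 / real d) \<le> kap" using k1 by (simp add: mult_left_le)
  thus ?thesis using t(4) by simp
qed

lemma unit_K: "u \<in> coeff_units K Lam \<Longrightarrow> u \<in> K \<and> u \<noteq> 0"
  unfolding coeff_units_def coeff_ring_def by auto

lemma prod_remove_id: "(\<Prod>\<sigma>\<in>E. f \<sigma>) = f idE * (\<Prod>\<sigma>\<in>E - {idE}. f \<sigma>)"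
  using prod.remove[OF fin_E id_emb] by simp

lemma sum_remove_id: "(\<Sum>\<sigma>\<in>E. f \<sigma>) = f idE + (\<Sum>\<sigma>\<in>E - {idE}. f \<sigma>)"
  using sum.remove[OF fin_E id_emb] by simp

lemma norm_rest: "u \<in> coeff_units K Lam \<Longrightarrow> (\<Prod>\<sigma>\<in>E - {idE}. cmod (\<sigma> u)) = 1 / \<bar>u\<bar>"
proof -
  assume u: "u \<in> coeff_units K Lam"
  have uK: "u \<in> K" "u \<noteq> 0" using unit_K[OF u] by auto
  have "1 = cmod (\<Prod>\<sigma>\<in>E. \<sigma> u)" using norm_unit[OF u] by simp
  also have "\<dots> = (\<Prod>\<sigma>\<in>E. cmod (\<sigma> u))" by (simp add: prod_norm)
  also have "\<dots> = \<bar>u\<bar> * (\<Prod>\<sigma>\<in>E - {idE}. cmod (\<sigma> u))"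
    unfolding prod_remove_id using idE_K[OF uK(1)] by simp
  finally show ?thesis using uK(2) by (simp add: field_simps)
qed

lemma norm_s: "s \<in> K \<Longrightarrow> \<bar>nf_norm K s\<bar> = \<bar>s\<bar> * (\<Prod>\<sigma>\<in>E - {idE}. cmod (\<sigma> s))"
proof -
  assume s: "s \<in> K"
  have "\<bar>nf_norm K s\<bar> = cmod (\<Prod>\<sigma>\<in>E. \<sigma> s)"
    unfolding nf_norm_def using prod_real[of s] by (simp add: cmod_eq_Re)
  also have "\<dots> = (\<Prod>\<sigma>\<in>E. cmod (\<sigma> s))" by (simp add: prod_norm)
  also have "\<dots> = \<bar>s\<bar> * (\<Prod>\<sigma>\<in>E - {idE}. cmod (\<sigma> s))"
    unfolding prod_remove_id using idE_K[OF s] by simp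
  finally show ?thesis .
qed

lemma trace_split: "y \<in> K \<Longrightarrow> nf_trace K y = y + Re (\<Sum>\<sigma>\<in>E - {idE}. \<sigma> y)"
  unfolding nf_trace_def sum_remove_id using idE_K by simp

lemma q_bound:
  assumes s: "s \<in> K" and u: "u \<in> K" "u \<noteq> 0" and b: "\<And>\<sigma>. \<sigma> \<in> E - {idE} \<Longrightarrow> cmod (\<sigma> u) \<le> kap"
  shows "\<bar>nf_trace K (s * u) / u - s\<bar> \<le> kap * (\<Sum>\<sigma>\<in>E - {idE}. cmod (\<sigma> s)) / \<bar>u\<bar>"
proof -
  have su: "s * u \<in> K" using K_mult[OF s u(1)] .
  have "nf_trace K (s * u) / u - s = Re (\<Sum>\<sigma>\<in>E - {idE}. \<sigma> (s * u)) / u"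
    unfolding trace_split[OF su] using u(2) by (simp add: field_simps)
  hence "\<bar>nf_trace K (s * u) / u - s\<bar> = \<bar>Re (\<Sum>\<sigma>\<in>E - {idE}. \<sigma> (s * u))\<bar> / \<bar>u\<bar>"
    by (simp add: abs_divide)
  also have "\<dots> \<le> kap * (\<Sum>\<sigma>\<in>E - {idE}. cmod (\<sigma> s)) / \<bar>u\<bar>"
  proof (rule divide_right_mono)
    have "\<bar>Re (\<Sum>\<sigma>\<in>E - {idE}. \<sigma> (s * u))\<bar> \<le> cmod (\<Sum>\<sigma>\<in>E - {idE}. \<sigma> (s * u))" by (rule abs_Re_le_cmod)
    also have "\<dots> \<le> (\<Sum>\<sigma>\<in>E - {idE}. cmod (\<sigma> (s * u)))" by (rule norm_sum)
    also have "\<dots> \<le> (\<Sum>\<sigma>\<in>E - {idE}. cmod (\<sigma> s) * kap)"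
    proof (rule sum_mono)
      fix \<sigma> assume sg: "\<sigma> \<in> E - {idE}"
      have "cmod (\<sigma> (s * u)) = cmod (\<sigma> s) * cmod (\<sigma> u)" using emb_mult[OF _ s u(1), of \<sigma>] sg by (simp add: norm_mult)
      thus "cmod (\<sigma> (s * u)) \<le> cmod (\<sigma> s) * kap" using b[OF sg] by (simp add: mult_left_mono)
    qed
    also have "\<dots> = kap * (\<Sum>\<sigma>\<in>E - {idE}. cmod (\<sigma> s))" by (simp add: sum_distrib_left mult.commute)
    finally show "\<bar>Re (\<Sum>\<sigma>\<in>E - {idE}. \<sigma> (s * u))\<bar> \<le> kap * (\<Sum>\<sigma>\<in>E - {idE}. cmod (\<sigma> s))" .
  qed simp
  finally show ?thesis .
qed

lemma limit_main:
  assumes s: "s \<in> K" "s \<noteq> 0"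
    and dom: "\<forall>k. dominant_unit d K Lam (useq k)" and inf: "filterlim (\<lambda>k. \<bar>useq k\<bar>) at_top sequentially"
  shows "(\<lambda>k. (\<bar>nf_trace K (s * useq k)\<bar> * (\<Prod>\<sigma>\<in>E - {idE}. cmod (\<sigma> (s * useq k)))) powr (1 / real d))
          \<longlonglongrightarrow> \<bar>nf_norm K s\<bar> powr (1 / real d)"
proof -
  define P where "P = (\<Prod>\<sigma>\<in>E - {idE}. cmod (\<sigma> s))"
  define C where "C = kap * (\<Sum>\<sigma>\<in>E - {idE}. cmod (\<sigma> s))"
  define q where "q k = nf_trace K (s * useq k)" for k
  have uu: "useq k \<in> coeff_units K Lam" for k using dom unfolding dominant_unit_def by auto
  have uK: "useq k \<in> K" "useq k \<noteq> 0" for k using unit_K[OF uu] by auto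
  have eq: "\<bar>q k\<bar> * (\<Prod>\<sigma>\<in>E - {idE}. cmod (\<sigma> (s * useq k))) = \<bar>q k / useq k\<bar> * P" for k
  proof -
    have "(\<Prod>\<sigma>\<in>E - {idE}. cmod (\<sigma> (s * useq k))) = (\<Prod>\<sigma>\<in>E - {idE}. cmod (\<sigma> s) * cmod (\<sigma> (useq k)))"
      by (rule prod.cong) (auto simp: emb_mult[OF _ s(1) uK(1)] norm_mult)
    also have "\<dots> = P * (1 / \<bar>useq k\<bar>)" unfolding P_def prod.distrib norm_rest[OF uu] ..
    finally show ?thesis using uK(2)[of k] by (simp add: abs_divide field_simps)
  qed
  have lim_q: "(\<lambda>k. q k / useq k) \<longlonglongrightarrow> s"
  proof -
    have "(\<lambda>k. q k / useq k - s) \<longlonglongrightarrow> 0"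
    proof (rule tendsto_0_le)
      show "(\<lambda>k. C / \<bar>useq k\<bar>) \<longlonglongrightarrow> 0"
        by (rule tendsto_divide_0[OF tendsto_const filterlim_at_top_imp_at_infinity[OF inf]])
      have "norm (q k / useq k - s) \<le> norm (C / \<bar>useq k\<bar>) * 1" for k
      proof -
        have "norm (q k / useq k - s) \<le> C / \<bar>useq k\<bar>"
        proof -
          have b: "\<And>\<sigma>. \<sigma> \<in> E - {idE} \<Longrightarrow> cmod (\<sigma> (useq k)) \<le> kap" using dom_bound dom by blast
          have "\<bar>nf_trace K (s * useq k) / useq k - s\<bar> \<le> kap * (\<Sum>\<sigma>\<in>E - {idE}. cmod (\<sigma> s)) / \<bar>useq k\<bar>"
            by (rule q_bound[OF s(1) uK(1)[of k] uK(2)[of k]]) (use b in blast)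
          thus ?thesis unfolding q_def C_def by simp
        qed
        also have "\<dots> \<le> norm (C / \<bar>useq k\<bar>)" by (simp add: divide_right_mono)
        finally show ?thesis by simp
      qed
      thus "\<forall>\<^sub>F k in sequentially. norm (q k / useq k - s) \<le> norm (C / \<bar>useq k\<bar>) * 1"
        by (intro always_eventually allI)
    qed
    thus ?thesis by (simp add: LIM_zero_iff)
  qed
  have "(\<lambda>k. \<bar>q k / useq k\<bar> * P) \<longlonglongrightarrow> \<bar>s\<bar> * P"
    by (intro tendsto_intros lim_q)
  moreover have "\<bar>s\<bar> * P = \<bar>nf_norm K s\<bar>" unfolding P_def using norm_s[OF s(1)] by simp
  ultimately have L: "(\<lambda>k. \<bar>q k\<bar> * (\<Prod>\<sigma>\<in>E - {idE}. cmod (\<sigma> (s * useq k)))) \<longlonglongrightarrow> \<bar>nf_norm K s\<bar>"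
    unfolding eq by simp
  have "P \<noteq> 0" unfolding P_def using emb_nonzero[OF _ s] fin_E by (auto simp: prod_zero_iff)
  hence N0: "\<bar>nf_norm K s\<bar> \<noteq> 0" using \<open>\<bar>s\<bar> * P = _\<close> s(2) by auto
  show ?thesis using tendsto_powr[OF L tendsto_const N0] unfolding q_def by simp
qed

end


context nfb begin

lemma tr0: "nf_trace K 0 = 0"
  unfolding nf_trace_def by (simp add: emb_zero)

lemma eq_part:
  assumes y: "y \<in> K" and i: "i < d"
  shows "(transpose_mat Mm *\<^sub>v vec d (xc (\<lambda>\<sigma>. \<sigma> y))) $ i
      = nf_trace K y * \<alpha> (i + 1) - nf_trace K (y * \<alpha> (i + 1))"
proof -
  have "(transpose_mat Mm *\<^sub>v vec d (xc (\<lambda>\<sigma>. \<sigma> y))) $ i = (\<Sum>j<d. Mf j i * xc (\<lambda>\<sigma>. \<sigma> y) j)"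
    using i by (simp add: Mm_def scalar_prod_def atLeast0LessThan)
  also have "\<dots> = Re (\<Sum>\<sigma>\<in>E. \<sigma> y * wv \<sigma> i)"
    by (rule key_id[where z="\<lambda>\<sigma>. \<sigma> y", symmetric]) (simp_all add: cj_def i)
  also have "\<dots> = nf_trace K y * \<alpha> (i + 1) - nf_trace K (y * \<alpha> (i + 1))"
    by (rule trace_id[OF y i, symmetric])
  finally show ?thesis .
qed

lemma per_s:
  assumes s: "s \<in> K"
  shows "\<exists>(\<gamma> :: real \<Rightarrow> real) (\<beta> :: real \<Rightarrow> real vec).
        (\<forall>u\<in>coeff_units K Lam.
           \<beta> u \<in> carrier_vec d \<and> on_surface rr mm (\<beta> u) \<and>
           (\<forall>i<d. \<bar>nf_trace K (s * u)\<bar> powr (1 / real d) *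
                    (nf_trace K (s * u) * \<alpha> (i + 1) - nf_trace K (s * u * \<alpha> (i + 1)))
                  = \<gamma> u * ((transpose_mat Mm *\<^sub>v \<beta> u) $ i))) \<and>
        (\<forall>useq :: nat \<Rightarrow> real.
           (\<forall>n. dominant_unit d K Lam (useq n)) \<and> filterlim (\<lambda>n. \<bar>useq n\<bar>) at_top sequentially
           \<longrightarrow> (\<lambda>n. \<gamma> (useq n)) \<longlonglongrightarrow> \<bar>nf_norm K s\<bar> powr (1 / real d))"
proof (cases "s = 0")
  case True
  define b0 where "b0 = vec d (\<lambda>j. if j < rr then 1 else if even (j - rr) then 1 else (0::real))"
  have N0: "nf_norm K 0 = 0"
    unfolding nf_norm_def prod_remove_id using idE_K[OF K_zero] by simp
  show ?thesis
  proof (intro exI[of _ "\<lambda>u. 0"] exI[of _ "\<lambda>u. b0"] conjI ballI allI impI)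
    show "b0 \<in> carrier_vec d" by (simp add: b0_def)
    have "Pf b0 = 1"
    proof -
      have a: "(\<Prod>j<rr. b0 $ j) = 1"
        by (rule prod.neutral) (use d_eq in \<open>auto simp: b0_def\<close>)
      have b: "(\<Prod>i<mm. (b0 $ (rr + 2*i))\<^sup>2 + (b0 $ (rr + 2*i + 1))\<^sup>2) = 1"
        by (rule prod.neutral) (use d_eq in \<open>auto simp: b0_def\<close>)
      show ?thesis unfolding Pf_def a b by simp
    qed
    thus "on_surface rr mm b0" by (simp only: on_surface_Pf)
    fix i
    show "\<bar>nf_trace K (s * u)\<bar> powr (1 / real d) *
          (nf_trace K (s * u) * \<alpha> (i + 1) - nf_trace K (s * u * \<alpha> (i + 1)))
          = 0 * ((transpose_mat Mm *\<^sub>v b0) $ i)" for u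
      using True by (simp add: tr0)
  next
    fix useq :: "nat \<Rightarrow> real"
    show "(\<lambda>n. 0) \<longlonglongrightarrow> \<bar>nf_norm K s\<bar> powr (1 / real d)" using True N0 by simp
  qed
next
  case False
  define Q where "Q u = (\<Prod>\<sigma>\<in>E - {idE}. cmod (\<sigma> (s * u)))" for u
  define xv where "xv u = vec d (xc (\<lambda>\<sigma>. \<sigma> (s * u)))" for u
  define \<beta> where "\<beta> u = (1 / Q u powr (1 / real d)) \<cdot>\<^sub>v xv u" for u
  define \<gamma> where "\<gamma> u = \<bar>nf_trace K (s * u)\<bar> powr (1 / real d) * Q u powr (1 / real d)" for u
  have Qpos: "Q u > 0" if u: "u \<in> coeff_units K Lam" for u
  proof -
    have su: "s * u \<in> K" "s * u \<noteq> 0" using unit_K[OF u] K_mult[OF s] False by auto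
    show ?thesis unfolding Q_def
      by (rule prod_pos) (use emb_nonzero[OF _ su] in auto)
  qed
  show ?thesis
  proof (intro exI[of _ \<gamma>] exI[of _ \<beta>] conjI ballI allI impI)
    fix u assume u: "u \<in> coeff_units K Lam"
    have su: "s * u \<in> K" using unit_K[OF u] K_mult[OF s] by auto
    have xvc: "xv u \<in> carrier_vec d" unfolding xv_def by simp
    show "\<beta> u \<in> carrier_vec d" unfolding \<beta>_def using xvc by simp
    have "Pf (\<beta> u) = 1"
    proof (cases "d = 0")
      case True
      hence "rr = 0" "mm = 0" using d_eq by auto
      thus ?thesis unfolding Pf_def by simp
    next
      case d0: False
      have Q: "Q u > 0" by (rule Qpos[OF u])
      have "Pf (\<beta> u) = (1 / Q u powr (1 / real d)) ^ d * Pf (xv u)"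
        unfolding \<beta>_def by (rule Pf_scale[OF xvc]) simp
      also have "Pf (xv u) = Q u" unfolding xv_def Q_def by (rule Pf_xc[OF su])
      also have "(Q u powr (1 / real d)) ^ d = Q u"
      proof -
        have "(Q u powr (1 / real d)) ^ d = (Q u powr (1 / real d)) powr real d"
          using Q by (simp add: powr_realpow)
        also have "\<dots> = Q u" using Q d0 by (simp add: powr_powr)
        finally show ?thesis .
      qed
      hence "(1 / Q u powr (1 / real d)) ^ d = 1 / Q u" by (simp add: power_divide)
      finally show ?thesis using Q by simp
    qed
    thus "on_surface rr mm (\<beta> u)" by (simp only: on_surface_Pf)
    fix i assume i: "i < d"
    have Q: "Q u powr (1 / real d) > 0" using Qpos[OF u] by simp
    have "(transpose_mat Mm *\<^sub>v \<beta> u) $ i = (1 / Q u powr (1 / real d)) * (transpose_mat Mm *\<^sub>v xv u) $ i"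
      unfolding \<beta>_def using mult_mat_vec[of "transpose_mat Mm" d d "xv u"] Mm_carrier xvc i by simp
    also have "(transpose_mat Mm *\<^sub>v xv u) $ i = nf_trace K (s * u) * \<alpha> (i + 1) - nf_trace K (s * u * \<alpha> (i + 1))"
      unfolding xv_def by (rule eq_part[OF su i])
    finally show "\<bar>nf_trace K (s * u)\<bar> powr (1 / real d) *
          (nf_trace K (s * u) * \<alpha> (i + 1) - nf_trace K (s * u * \<alpha> (i + 1)))
          = \<gamma> u * ((transpose_mat Mm *\<^sub>v \<beta> u) $ i)"
      unfolding \<gamma>_def using Q by simp
  next
    fix useq :: "nat \<Rightarrow> real"
    assume h: "(\<forall>n. dominant_unit d K Lam (useq n)) \<and> filterlim (\<lambda>n. \<bar>useq n\<bar>) at_top sequentially"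
    have "\<gamma> (useq k) = (\<bar>nf_trace K (s * useq k)\<bar> * Q (useq k)) powr (1 / real d)" for k
    proof -
      have "Q (useq k) \<ge> 0" unfolding Q_def by (simp add: prod_nonneg)
      thus ?thesis unfolding \<gamma>_def by (simp add: powr_mult)
    qed
    thus "(\<lambda>n. \<gamma> (useq n)) \<longlonglongrightarrow> \<bar>nf_norm K s\<bar> powr (1 / real d)"
      using limit_main[OF s False, of useq] h unfolding Q_def by simp
  qed
qed

lemma main: "\<exists>M :: real mat. M \<in> carrier_mat d d \<and> invertible_mat M \<and>
    (\<forall>s\<in>nf_dual K Lam.
      \<exists>(\<gamma> :: real \<Rightarrow> real) (\<beta> :: real \<Rightarrow> real vec).
        (\<forall>u\<in>coeff_units K Lam.
           \<beta> u \<in> carrier_vec d \<and> on_surface rr mm (\<beta> u) \<and>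
           (\<forall>i<d. \<bar>nf_trace K (s * u)\<bar> powr (1 / real d) *
                    (nf_trace K (s * u) * \<alpha> (i + 1) - nf_trace K (s * u * \<alpha> (i + 1)))
                  = \<gamma> u * ((transpose_mat M *\<^sub>v \<beta> u) $ i))) \<and>
        (\<forall>useq :: nat \<Rightarrow> real.
           (\<forall>n. dominant_unit d K Lam (useq n)) \<and> filterlim (\<lambda>n. \<bar>useq n\<bar>) at_top sequentially
           \<longrightarrow> (\<lambda>n. \<gamma> (useq n)) \<longlonglongrightarrow> \<bar>nf_norm K s\<bar> powr (1 / real d)))"
proof (intro exI[of _ Mm] conjI ballI)
  show "Mm \<in> carrier_mat d d" by (rule Mm_carrier)
  show "invertible_mat Mm" by (rule M_invertible)
  fix s assume "s \<in> nf_dual K Lam"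
  hence "s \<in> K" unfolding nf_dual_def by auto
  thus "\<exists>(\<gamma> :: real \<Rightarrow> real) (\<beta> :: real \<Rightarrow> real vec).
        (\<forall>u\<in>coeff_units K Lam.
           \<beta> u \<in> carrier_vec d \<and> on_surface rr mm (\<beta> u) \<and>
           (\<forall>i<d. \<bar>nf_trace K (s * u)\<bar> powr (1 / real d) *
                    (nf_trace K (s * u) * \<alpha> (i + 1) - nf_trace K (s * u * \<alpha> (i + 1)))
                  = \<gamma> u * ((transpose_mat Mm *\<^sub>v \<beta> u) $ i))) \<and>
        (\<forall>useq :: nat \<Rightarrow> real.
           (\<forall>n. dominant_unit d K Lam (useq n)) \<and> filterlim (\<lambda>n. \<bar>useq n\<bar>) at_top sequentially
           \<longrightarrow> (\<lambda>n. \<gamma> (useq n)) \<longlonglongrightarrow> \<bar>nf_norm K s\<bar> powr (1 / real d))"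
    by (rule per_s)
qed

end

theorem lemma11:
  fixes d :: nat and \<alpha> :: "nat \<Rightarrow> real"
  defines "K \<equiv> nf_K d \<alpha>"
      and "\<Lambda> \<equiv> nf_lattice d \<alpha>"
      and "r \<equiv> card (nf_real_embs (nf_K d \<alpha>)) - 1"
      and "m \<equiv> card (nf_nonreal_embs (nf_K d \<alpha>)) div 2"
  assumes basis: "nf_basis d \<alpha>"
  shows "\<exists>M :: real mat. M \<in> carrier_mat d d \<and> invertible_mat M \<and>
    (\<forall>s\<in>nf_dual K \<Lambda>.
      \<exists>(\<gamma> :: real \<Rightarrow> real) (\<beta> :: real \<Rightarrow> real vec).
        (\<forall>u\<in>coeff_units K \<Lambda>.
           \<beta> u \<in> carrier_vec d \<and> on_surface r m (\<beta> u) \<and>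
           (\<forall>i<d. \<bar>nf_trace K (s * u)\<bar> powr (1 / real d) *
                    (nf_trace K (s * u) * \<alpha> (i + 1) - nf_trace K (s * u * \<alpha> (i + 1)))
                  = \<gamma> u * ((transpose_mat M *\<^sub>v \<beta> u) $ i))) \<and>
        (\<forall>useq :: nat \<Rightarrow> real.
           (\<forall>n. dominant_unit d K \<Lambda> (useq n)) \<and> filterlim (\<lambda>n. \<bar>useq n\<bar>) at_top sequentially
           \<longrightarrow> (\<lambda>n. \<gamma> (useq n)) \<longlonglongrightarrow> \<bar>nf_norm K s\<bar> powr (1 / real d)))"
proof -
  interpret nfb d \<alpha> by (rule nfb.intro) (rule basis)
  show ?thesis unfolding K_def \<Lambda>_def r_def m_def by (rule main)
qed


end
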